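(* Let $(V,E,\mu)$ be an infinite, connected, locally finite weighted graph, $o\in V$, $q>1$, and $R\ge1$ an integer. Then $$L_R:=\sum_{x\in B_R}g_{B_R}(o,x)^q\mu(x)\ \ge\ \frac{q-1}4\sum_{n=1}^R n\Big(\sum_{k=n}^R\frac1{b_k}\Big)^{q-1}.$$
   Context: Weighted graph: $\mu_{xy}=\mu_{yx}\ge0$, $\mu_{xy}>0$ iff $x\sim y$, $\mu(x)=\sum_{y\sim x}\mu_{xy}$. $d$ is graph distance, $B_k=B(o,k)=\{x:d(o,x)\le k\}$, $S_k=\{x:d(o,x)=k\}$. $b_k=\sum_{x\in B_k,\,y\notin B_k,\,x\sim y}\mu_{xy}$ (the total conductance of edges between $S_k$ and $S_{k+1}$), which is positive. $g_{B_R}(o,x)$ is the Dirichlet Green function of $B_R$: $g_{B_R}(o,x)=\sum_{n\ge0}\mathbb P_o[X_n=x,n<\tau_{B_R}]/\mu(x)$ for $x\in B_R$, $0$ otherwise, where $(X_n)$ is the random walk with $P(x,y)=\mu_{xy}/\mu(x)$ and $\tau_{B_R}$ is its exit time from $B_R$; equivalently $g_{B_R}(o,\cdot)=\varphi_R/\mathrm{Cap}(o,B_R^c)$ where $\varphi_R$ is $1$ at $o$, $0$ off $B_R$, harmonic in $B_R\setminus\{o\}$. *)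

theory Defs
  imports "HOL-Analysis.Analysis"
begin

definition adj :: "('a \<Rightarrow> 'a \<Rightarrow> real) \<Rightarrow> 'a \<Rightarrow> 'a \<Rightarrow> bool" where
  "adj mu x y \<longleftrightarrow> mu x y > 0"

definition weighted_graph :: "('a \<Rightarrow> 'a \<Rightarrow> real) \<Rightarrow> bool" where
  "weighted_graph mu \<longleftrightarrow> (\<forall>x y. mu x y = mu y x \<and> mu x y \<ge> 0)"

definition locally_finite :: "('a \<Rightarrow> 'a \<Rightarrow> real) \<Rightarrow> bool" where
  "locally_finite mu \<longleftrightarrow> (\<forall>x. finite {y. adj mu x y})"

definition connected_graph :: "('a \<Rightarrow> 'a \<Rightarrow> real) \<Rightarrow> bool" where
  "connected_graph mu \<longleftrightarrow> (\<forall>x y. (adj mu)\<^sup>*\<^sup>* x y)"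

definition vmeas :: "('a \<Rightarrow> 'a \<Rightarrow> real) \<Rightarrow> 'a \<Rightarrow> real" where
  "vmeas mu x = (\<Sum>y\<in>{y. adj mu x y}. mu x y)"

definition gdist :: "('a \<Rightarrow> 'a \<Rightarrow> real) \<Rightarrow> 'a \<Rightarrow> 'a \<Rightarrow> nat" where
  "gdist mu x y = (LEAST n. (adj mu ^^ n) x y)"

definition gball :: "('a \<Rightarrow> 'a \<Rightarrow> real) \<Rightarrow> 'a \<Rightarrow> nat \<Rightarrow> 'a set" where
  "gball mu v0 k = {x. gdist mu v0 x \<le> k}"

text \<open>b_k: total conductance of the edges leaving B(v0,k)\<close>
definition bcond :: "('a \<Rightarrow> 'a \<Rightarrow> real) \<Rightarrow> 'a \<Rightarrow> nat \<Rightarrow> real" where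
  "bcond mu v0 k = (\<Sum>(x,y)\<in>{(x,y). x \<in> gball mu v0 k \<and> y \<notin> gball mu v0 k \<and> adj mu x y}. mu x y)"

text \<open>Random walk killed on leaving B: walk_prob mu B v0 n x = P_o[X_n = x, n < tau_B]
  (for x in B; 0 outside B).\<close>
fun walk_prob :: "('a \<Rightarrow> 'a \<Rightarrow> real) \<Rightarrow> 'a set \<Rightarrow> 'a \<Rightarrow> nat \<Rightarrow> 'a \<Rightarrow> real" where
  "walk_prob mu B v0 0 x = (if x = v0 \<and> v0 \<in> B then 1 else 0)"
| "walk_prob mu B v0 (Suc n) y =
     (if y \<in> B then (\<Sum>x\<in>B. walk_prob mu B v0 n x * (mu x y / vmeas mu x)) else 0)"

definition green :: "('a \<Rightarrow> 'a \<Rightarrow> real) \<Rightarrow> 'a set \<Rightarrow> 'a \<Rightarrow> 'a \<Rightarrow> real" where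
  "green mu B v0 x = (if x \<in> B then (\<Sum>n. walk_prob mu B v0 n x) / vmeas mu x else 0)"

end

theory Submission
  imports Defs
begin

locale wg =
  fixes mu :: "'a \<Rightarrow> 'a \<Rightarrow> real" and v0 :: 'a
  assumes wg: "weighted_graph mu" and inf: "infinite (UNIV::'a set)"
    and conn: "connected_graph mu" and lf: "locally_finite mu"
begin

abbreviation d where "d x \<equiv> gdist mu v0 x"
abbreviation N where "N x \<equiv> {y. adj mu x y}"
abbreviation m where "m x \<equiv> vmeas mu x"

lemma mu_sym: "mu x y = mu y x" using wg unfolding weighted_graph_def by auto
lemma mu_nn: "mu x y \<ge> 0" using wg unfolding weighted_graph_def by auto
lemma adj_sym: "adj mu x y = adj mu y x" unfolding adj_def using mu_sym by simp
lemma not_adj: "\<not> adj mu x y \<Longrightarrow> mu x y = 0" unfolding adj_def using mu_nn[of x y] by simp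
lemma fin_N: "finite (N x)" using lf unfolding locally_finite_def by auto

lemma relpow_d: "(adj mu ^^ d x) v0 x"
proof -
  have "\<exists>n. (adj mu ^^ n) v0 x" using conn unfolding connected_graph_def rtranclp_power by auto
  then show ?thesis unfolding gdist_def by (rule LeastI_ex)
qed

lemma d_le: "(adj mu ^^ n) v0 x \<Longrightarrow> d x \<le> n"
  unfolding gdist_def by (rule Least_le)

lemma d_adj: "adj mu x y \<Longrightarrow> d y \<le> Suc (d x)"
  using relpow_d[of x] by (intro d_le) (auto intro: relpowp_Suc_I)

lemma d_adj2: "adj mu x y \<Longrightarrow> d x \<le> Suc (d y)"
  using d_adj adj_sym by metis

lemma d_v0[simp]: "d v0 = 0"
proof -
  have "(adj mu ^^ 0) v0 v0" by simp
  from d_le[OF this] show ?thesis by simp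
qed

lemma d0_iff: "d x = 0 \<longleftrightarrow> x = v0"
proof
  assume "d x = 0" then show "x = v0" using relpow_d[of x] by simp
qed simp

lemma d_pred: assumes "d y = Suc k" shows "\<exists>z. d z = k \<and> adj mu z y"
proof -
  from relpow_d[of y] assms have "(adj mu ^^ Suc k) v0 y" by simp
  then obtain z where z: "(adj mu ^^ k) v0 z" "adj mu z y" by (auto elim: relpowp_Suc_E)
  have "d z \<le> k" using d_le[OF z(1)] .
  moreover have "Suc k \<le> Suc (d z)" using d_adj[OF z(2)] assms by simp
  ultimately show ?thesis using z(2) by auto
qed

lemma ball_finite: "finite (gball mu v0 k)"
proof (induction k)
  case 0
  have "gball mu v0 0 = {v0}" unfolding gball_def using d0_iff by auto
  then show ?case by simp
next
  case (Suc k)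
  have "gball mu v0 (Suc k) \<subseteq> gball mu v0 k \<union> (\<Union>x\<in>gball mu v0 k. N x)"
  proof
    fix y assume "y \<in> gball mu v0 (Suc k)"
    then have "d y \<le> Suc k" unfolding gball_def by auto
    then consider "d y \<le> k" | "d y = Suc k" by linarith
    then show "y \<in> gball mu v0 k \<union> (\<Union>x\<in>gball mu v0 k. N x)"
    proof cases
      case 1 then show ?thesis unfolding gball_def by auto
    next
      case 2 then obtain z where "d z = k" "adj mu z y" using d_pred by blast
      then show ?thesis unfolding gball_def by auto
    qed
  qed
  moreover have "finite (gball mu v0 k \<union> (\<Union>x\<in>gball mu v0 k. N x))"
    using Suc fin_N by auto
  ultimately show ?case by (rule finite_subset)
qed

lemma has_nb: "\<exists>y. adj mu x y"
proof -
  obtain y where "y \<noteq> x" using inf by (metis UNIV_eq_I finite.simps insertI1 singletonD)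
  moreover have "(adj mu)\<^sup>*\<^sup>* x y" using conn unfolding connected_graph_def by auto
  ultimately show ?thesis by (metis converse_rtranclpE)
qed

lemma m_pos: "m x > 0"
proof -
  obtain y where y: "adj mu x y" using has_nb by blast
  have "m x = (\<Sum>z\<in>N x. mu x z)" unfolding vmeas_def by simp
  also have "\<dots> \<ge> mu x y" using y fin_N[of x] mu_nn
    by (intro member_le_sum) auto
  finally show ?thesis using y unfolding adj_def by simp
qed

lemma m_eq: "finite S \<Longrightarrow> N x \<subseteq> S \<Longrightarrow> m x = (\<Sum>y\<in>S. mu x y)"
  unfolding vmeas_def by (rule sum.mono_neutral_left) (auto intro: not_adj)

end

locale wgR = wg + fixes R :: nat
begin

abbreviation BB where "BB \<equiv> gball mu v0 R"
abbreviation wp where "wp z n y \<equiv> walk_prob mu BB z n y"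
definition P where "P x y = mu x y / m x"
definition M where "M z n = (\<Sum>y\<in>BB. wp z n y)"

lemma finB: "finite BB" by (rule ball_finite)
lemma v0B: "v0 \<in> BB" unfolding gball_def by simp

lemma P_nn: "P x y \<ge> 0" unfolding P_def using mu_nn m_pos[of x] by simp

lemma wp_0: "wp z 0 y = (if y = z \<and> z \<in> BB then 1 else 0)" by simp
lemma wp_Suc: "wp z (Suc n) y = (if y \<in> BB then (\<Sum>x\<in>BB. wp z n x * P x y) else 0)"
  unfolding P_def by simp
declare walk_prob.simps[simp del]

lemma wp_nn: "wp z n y \<ge> 0"
  by (induction n arbitrary: y) (auto intro!: sum_nonneg mult_nonneg_nonneg simp: P_nn wp_0 wp_Suc)

lemma wp_out: "y \<notin> BB \<Longrightarrow> wp z n y = 0"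
  by (cases n) (auto simp: wp_0 wp_Suc)

lemma rowsum: "(\<Sum>y\<in>BB. P x y) \<le> 1"
proof -
  have "(\<Sum>y\<in>BB. mu x y) \<le> (\<Sum>y\<in>BB \<union> N x. mu x y)"
    using finB fin_N mu_nn by (intro sum_mono2) auto
  also have "\<dots> = m x" using finB fin_N by (intro m_eq[symmetric]) auto
  finally show ?thesis unfolding P_def using m_pos[of x]
    by (simp add: sum_divide_distrib[symmetric] divide_le_eq_1)
qed

lemma M_Suc: "M z (Suc n) \<le> M z n"
proof -
  have "M z (Suc n) = (\<Sum>y\<in>BB. \<Sum>x\<in>BB. wp z n x * P x y)" unfolding M_def wp_Suc
    by (intro sum.cong) auto
  also have "\<dots> = (\<Sum>x\<in>BB. wp z n x * (\<Sum>y\<in>BB. P x y))"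
    by (subst sum.swap) (simp add: sum_distrib_left)
  also have "\<dots> \<le> (\<Sum>x\<in>BB. wp z n x * 1)"
    by (intro sum_mono mult_left_mono rowsum wp_nn)
  finally show ?thesis unfolding M_def by simp
qed

lemma M_mono: "n \<le> n' \<Longrightarrow> M z n' \<le> M z n"
  by (induction n' rule: dec_induct) (auto intro: order_trans[OF M_Suc])

lemma M0: "z \<in> BB \<Longrightarrow> M z 0 = 1"
  unfolding M_def using finB by (simp add: sum.delta wp_0)

lemma M_le1: "z \<in> BB \<Longrightarrow> M z n \<le> 1"
  using M_mono[of 0 n z] M0 by simp

lemma M_nn: "M z n \<ge> 0" unfolding M_def by (intro sum_nonneg wp_nn)

lemma first_step: "z \<in> BB \<Longrightarrow> wp z (Suc n) w = (\<Sum>y\<in>BB. P z y * wp y n w)"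
proof (induction n arbitrary: w)
  case 0
  show ?case
  proof (cases "w \<in> BB")
    case True
    have "wp z (Suc 0) w = (\<Sum>x\<in>BB. wp z 0 x * P x w)" using True by (simp only: wp_Suc if_True)
    also have "\<dots> = (\<Sum>x\<in>BB. if x = z then P z w else 0)" using 0 by (intro sum.cong) (auto simp: wp_0)
    also have "\<dots> = P z w" using 0 finB by (simp add: sum.delta)
    also have "\<dots> = (\<Sum>y\<in>BB. if y = w then P z w else 0)" using True finB by (simp add: sum.delta)
    also have "\<dots> = (\<Sum>y\<in>BB. P z y * wp y 0 w)" by (intro sum.cong) (auto simp: wp_0)
    finally show ?thesis .
  next
    case False then show ?thesis by (simp add: wp_out)
  qed
next
  case (Suc n)
  show ?case
  proof (cases "w \<in> BB")
    case True
    have "wp z (Suc (Suc n)) w = (\<Sum>x\<in>BB. wp z (Suc n) x * P x w)"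
      using True by (simp only: wp_Suc if_True)
    also have "\<dots> = (\<Sum>x\<in>BB. (\<Sum>y\<in>BB. P z y * wp y n x) * P x w)"
      using Suc by simp
    also have "\<dots> = (\<Sum>y\<in>BB. P z y * (\<Sum>x\<in>BB. wp y n x * P x w))"
      by (simp add: sum_distrib_left sum_distrib_right mult.assoc) (rule sum.swap)
    also have "\<dots> = (\<Sum>y\<in>BB. P z y * wp y (Suc n) w)" using True by (simp only: wp_Suc if_True)
    finally show ?thesis .
  next
    case False then show ?thesis by (simp add: wp_out)
  qed
qed

lemma M_first: assumes "z \<in> BB" shows "M z (Suc n) = (\<Sum>y\<in>BB. P z y * M y n)"
proof -
  have "M z (Suc n) = (\<Sum>w\<in>BB. \<Sum>y\<in>BB. P z y * wp y n w)" unfolding M_def using first_step[OF assms] by simp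
  also have "\<dots> = (\<Sum>y\<in>BB. \<Sum>w\<in>BB. P z y * wp y n w)" by (rule sum.swap)
  finally show ?thesis unfolding M_def by (simp add: sum_distrib_left)
qed

lemma exit_lemma:
  assumes "(adj mu)\<^sup>*\<^sup>* z w" "w \<notin> BB" shows "z \<in> BB \<Longrightarrow> \<exists>n. M z n < 1"
  using assms(1)
proof (induction rule: converse_rtranclp_induct)
  case base then show ?case using assms(2) by simp
next
  case (step z z1)
  show ?case
  proof (cases "z1 \<in> BB")
    case False
    have "(\<Sum>y\<in>BB. mu z y) + mu z z1 = (\<Sum>y\<in>insert z1 BB. mu z y)"
      using False finB by simp
    also have "\<dots> \<le> (\<Sum>y\<in>BB \<union> N z. mu z y)"
      using finB fin_N mu_nn step(1) by (intro sum_mono2) auto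
    also have "\<dots> = m z" using finB fin_N by (intro m_eq[symmetric]) auto
    finally have "(\<Sum>y\<in>BB. mu z y) < m z" using step(1) unfolding adj_def by simp
    then have "(\<Sum>y\<in>BB. P z y) < 1" unfolding P_def using m_pos[of z]
      by (simp add: sum_divide_distrib[symmetric])
    moreover have "M z 1 = (\<Sum>y\<in>BB. P z y)" using M_first[OF step(4), of 0] M0 by simp
    ultimately have "M z 1 < 1" by simp
    then show ?thesis by blast
  next
    case True
    then obtain n where n: "M z1 n < 1" using step by blast
    have "(\<Sum>y\<in>BB. P z y * M y n) < (\<Sum>y\<in>BB. P z y)"
    proof (rule sum_strict_mono_ex1[OF finB])
      show "\<forall>y\<in>BB. P z y * M y n \<le> P z y" using M_le1 P_nn
        by (simp add: mult_left_le)
      have "P z z1 > 0" using step(1) m_pos[of z] unfolding P_def adj_def by simp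
      then show "\<exists>y\<in>BB. P z y * M y n < P z y" using True n by (intro bexI[of _ z1]) auto
    qed
    then have "M z (Suc n) < 1" using M_first[OF step(4)] rowsum[of z] by simp
    then show ?thesis by blast
  qed
qed

lemma exists_exit: "z \<in> BB \<Longrightarrow> \<exists>n. M z n < 1"
proof -
  assume z: "z \<in> BB"
  obtain w where "w \<notin> BB" using finB inf by (metis UNIV_I ex_new_if_finite)
  moreover have "(adj mu)\<^sup>*\<^sup>* z w" using conn unfolding connected_graph_def by auto
  ultimately show ?thesis using exit_lemma z by blast
qed

lemma uniform_exit: "\<exists>K \<rho>. K \<ge> 1 \<and> \<rho> < 1 \<and> (\<forall>z\<in>BB. M z K \<le> \<rho>)"
proof -
  define nz where "nz z = (SOME n. M z n < 1)" for z
  have nz: "z \<in> BB \<Longrightarrow> M z (nz z) < 1" for z unfolding nz_def using exists_exit by (metis someI_ex)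
  define K where "K = Suc (Max (nz ` BB))"
  define \<rho> where "\<rho> = Max ((\<lambda>z. M z K) ` BB)"
  have Kz: "z \<in> BB \<Longrightarrow> M z K < 1" for z
  proof -
    assume z: "z \<in> BB"
    have "nz z \<le> K" unfolding K_def using finB z by (simp add: le_SucI)
    then show ?thesis using M_mono nz[OF z] by (meson le_less_trans)
  qed
  have "\<rho> < 1" unfolding \<rho>_def using finB v0B Kz by (subst Max_less_iff) auto
  moreover have "\<forall>z\<in>BB. M z K \<le> \<rho>" unfolding \<rho>_def using finB by auto
  moreover have "K \<ge> 1" unfolding K_def by simp
  ultimately show ?thesis by blast
qed

lemma semigroup: "wp v0 (n + k) w = (\<Sum>z\<in>BB. wp v0 n z * wp z k w)"
proof (induction k arbitrary: w)
  case 0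
  show ?case
  proof (cases "w \<in> BB")
    case True
    have "(\<Sum>z\<in>BB. wp v0 n z * wp z 0 w) = (\<Sum>z\<in>BB. if z = w then wp v0 n w else 0)"
      by (intro sum.cong) (auto simp: wp_0)
    also have "\<dots> = wp v0 n w" using True finB by (simp add: sum.delta)
    finally show ?thesis by simp
  next
    case False
    have "wp v0 n w = 0" using False by (rule wp_out)
    moreover have "(\<Sum>z\<in>BB. wp v0 n z * wp z 0 w) = 0" using False by (intro sum.neutral) (auto simp: wp_0)
    ultimately show ?thesis by simp
  qed
next
  case (Suc k)
  show ?case
  proof (cases "w \<in> BB")
    case True
    have "wp v0 (n + Suc k) w = (\<Sum>x\<in>BB. wp v0 (n + k) x * P x w)"
      using True by (simp only: add_Suc_right wp_Suc if_True)
    also have "\<dots> = (\<Sum>x\<in>BB. (\<Sum>z\<in>BB. wp v0 n z * wp z k x) * P x w)" using Suc by simp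
    also have "\<dots> = (\<Sum>z\<in>BB. wp v0 n z * (\<Sum>x\<in>BB. wp z k x * P x w))"
      by (simp add: sum_distrib_left sum_distrib_right mult.assoc) (rule sum.swap)
    also have "\<dots> = (\<Sum>z\<in>BB. wp v0 n z * wp z (Suc k) w)" using True by (simp only: wp_Suc if_True)
    finally show ?thesis .
  next
    case False then show ?thesis by (simp add: wp_out)
  qed
qed

lemma M_semi: "M v0 (n + k) = (\<Sum>z\<in>BB. wp v0 n z * M z k)"
  unfolding M_def semigroup by (simp add: sum_distrib_left) (rule sum.swap)

lemma sum_split_add: "(\<Sum>n<a+b. f n) = (\<Sum>n<a. f n) + (\<Sum>n<b. f (n + a :: nat))"
  by (induction b) (auto simp: add.commute add.left_commute)

lemma summable_M: "summable (M v0)"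
proof -
  obtain K \<rho> where K: "K \<ge> 1" "\<rho> < 1" "\<forall>z\<in>BB. M z K \<le> \<rho>" using uniform_exit by blast
  have rec: "M v0 (n + K) \<le> \<rho> * M v0 n" for n
  proof -
    have "M v0 (n + K) = (\<Sum>z\<in>BB. wp v0 n z * M z K)" by (rule M_semi)
    also have "\<dots> \<le> (\<Sum>z\<in>BB. wp v0 n z * \<rho>)" using K(3) wp_nn by (intro sum_mono mult_left_mono) auto
    also have "\<dots> = \<rho> * M v0 n" unfolding M_def by (simp add: sum_distrib_left mult.commute)
    finally show ?thesis .
  qed
  have rho_nn: "\<rho> \<ge> 0" using K(3) M_nn v0B by (meson order_trans)
  define S where "S j = (\<Sum>n<K * j. M v0 n)" for j
  have S: "S j \<le> K / (1 - \<rho>)" for j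
  proof (induction j)
    case 0 then show ?case using K by (simp add: S_def)
  next
    case (Suc j)
    have "S (Suc j) = (\<Sum>n<K. M v0 n) + (\<Sum>n<K*j. M v0 (n + K))"
      unfolding S_def by (simp add: sum_split_add)
    also have "\<dots> \<le> (\<Sum>n<K. 1) + (\<Sum>n<K*j. \<rho> * M v0 n)"
      using M_le1[OF v0B] rec by (intro add_mono sum_mono) auto
    also have "\<dots> = K + \<rho> * S j" by (simp add: S_def sum_distrib_left)
    also have "\<dots> \<le> K + \<rho> * (K / (1 - \<rho>))" using Suc rho_nn by (intro add_left_mono mult_left_mono) auto
    also have "\<dots> = K / (1 - \<rho>)" using K(2) by (simp add: field_simps)
    finally show ?case .
  qed
  show ?thesis
  proof (rule summableI_nonneg_bounded)
    show "0 \<le> M v0 n" for n by (rule M_nn)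
    show "(\<Sum>i<n. M v0 i) \<le> K / (1 - \<rho>)" for n
    proof -
      have "(\<Sum>i<n. M v0 i) \<le> (\<Sum>i<K*n. M v0 i)" using K(1) M_nn
        by (intro sum_mono2) auto
      then show ?thesis using S[of n] unfolding S_def by simp
    qed
  qed
qed

lemma summable_wp: "summable (\<lambda>n. wp v0 n y)"
proof (cases "y \<in> BB")
  case True
  show ?thesis
  proof (rule summable_comparison_test'[OF summable_M])
    show "norm (wp v0 n y) \<le> M v0 n" for n
      unfolding M_def using wp_nn finB True by (simp add: member_le_sum)
  qed
next
  case False then show ?thesis by (simp add: wp_out)
qed

abbreviation g where "g \<equiv> green mu BB v0"

lemma g_nn: "g x \<ge> 0"
  unfolding green_def using m_pos wp_nn summable_wp by (auto intro!: divide_nonneg_pos suminf_nonneg)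

lemma g_out: "x \<notin> BB \<Longrightarrow> g x = 0" unfolding green_def by simp

lemma green_eq: assumes y: "y \<in> BB"
  shows "m y * g y = (if y = v0 then 1 else 0) + (\<Sum>x\<in>BB. mu y x * g x)"
proof -
  have S: "(\<Sum>n. wp v0 n x) = m x * g x" if "x \<in> BB" for x
    unfolding green_def using that m_pos[of x] by simp
  have "(\<Sum>n. wp v0 n y) = wp v0 0 y + (\<Sum>n. wp v0 (Suc n) y)"
    using suminf_split_head[OF summable_wp[of y]] by simp
  also have "(\<Sum>n. wp v0 (Suc n) y) = (\<Sum>n. \<Sum>x\<in>BB. wp v0 n x * P x y)"
    using y by (simp only: wp_Suc if_True)
  also have "\<dots> = (\<Sum>x\<in>BB. \<Sum>n. wp v0 n x * P x y)"
    by (rule suminf_sum) (intro summable_mult2 summable_wp)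
  also have "\<dots> = (\<Sum>x\<in>BB. (\<Sum>n. wp v0 n x) * P x y)"
    by (intro sum.cong refl suminf_mult2[symmetric] summable_wp)
  also have "\<dots> = (\<Sum>x\<in>BB. mu y x * g x)"
  proof (intro sum.cong refl)
    fix x assume "x \<in> BB"
    then show "(\<Sum>n. wp v0 n x) * P x y = mu y x * g x"
      using S m_pos[of x] by (simp add: P_def mu_sym[of x y])
  qed
  finally show ?thesis using S[OF y] y v0B by (auto simp: wp_0)
qed

end

context wgR
begin

abbreviation VV where "VV \<equiv> gball mu v0 (Suc R)"
definition PP where "PP = (SIGMA x:VV. {y\<in>VV. adj mu x y})"

lemma finVV: "finite VV" by (rule ball_finite)
lemma finPP: "finite PP" unfolding PP_def using finVV by auto
lemma BB_VV: "BB \<subseteq> VV" unfolding gball_def by auto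

lemma PP_iff: "(x,y) \<in> PP \<longleftrightarrow> x \<in> VV \<and> y \<in> VV \<and> adj mu x y" unfolding PP_def by auto

lemma N_VV: "x \<in> BB \<Longrightarrow> N x \<subseteq> VV"
  unfolding gball_def using d_adj by (auto dest!: d_adj[of x] simp: le_Suc_eq)

lemma sum_swap_PP: "(\<Sum>(x,y)\<in>PP. f x y) = (\<Sum>(x,y)\<in>PP. f y x)"
proof (rule sum.reindex_bij_witness[of _ prod.swap prod.swap])
qed (auto simp: PP_iff adj_sym)

lemma Lap: assumes y: "y \<in> BB"
  shows "(\<Sum>x\<in>N y. mu y x * (g y - g x)) = (if y = v0 then 1 else 0)"
proof -
  have "(\<Sum>x\<in>N y. mu y x * (g y - g x)) = m y * g y - (\<Sum>x\<in>N y. mu y x * g x)"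
    unfolding vmeas_def by (simp add: right_diff_distrib sum_subtractf sum_distrib_right)
  also have "(\<Sum>x\<in>N y. mu y x * g x) = (\<Sum>x\<in>BB \<union> N y. mu y x * g x)"
    using finB fin_N not_adj g_out by (intro sum.mono_neutral_left) auto
  also have "\<dots> = (\<Sum>x\<in>BB. mu y x * g x)"
    using finB fin_N not_adj g_out by (intro sum.mono_neutral_right) auto
  finally show ?thesis using green_eq[OF y] by simp
qed

lemma green_identity:
  assumes u: "\<And>z. z \<notin> BB \<Longrightarrow> u z = 0"
  shows "(\<Sum>(x,y)\<in>PP. mu x y * (u x - u y) * (g x - g y)) = 2 * u v0"
proof -
  have "(\<Sum>(x,y)\<in>PP. mu x y * (u x - u y) * (g x - g y))
      = (\<Sum>(x,y)\<in>PP. mu x y * u x * (g x - g y)) - (\<Sum>(x,y)\<in>PP. mu x y * u y * (g x - g y))"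
    by (simp add: sum_subtractf[symmetric] case_prod_beta algebra_simps)
  also have "(\<Sum>(x,y)\<in>PP. mu x y * u y * (g x - g y)) = - (\<Sum>(x,y)\<in>PP. mu x y * u x * (g x - g y))"
    by (subst sum_swap_PP) (simp add: sum_negf[symmetric] case_prod_beta mu_sym algebra_simps)
  also have "(\<Sum>(x,y)\<in>PP. mu x y * u x * (g x - g y)) = (\<Sum>x\<in>VV. \<Sum>y\<in>{y\<in>VV. adj mu x y}. mu x y * u x * (g x - g y))"
    unfolding PP_def by (subst sum.Sigma) (use finVV in auto)
  also have "\<dots> = (\<Sum>x\<in>BB. u x * (\<Sum>y\<in>N x. mu x y * (g x - g y)))"
  proof -
    have "(\<Sum>x\<in>VV. \<Sum>y\<in>{y\<in>VV. adj mu x y}. mu x y * u x * (g x - g y))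
        = (\<Sum>x\<in>BB. \<Sum>y\<in>{y\<in>VV. adj mu x y}. mu x y * u x * (g x - g y))"
      using finVV BB_VV u by (intro sum.mono_neutral_right) auto
    also have "\<dots> = (\<Sum>x\<in>BB. u x * (\<Sum>y\<in>N x. mu x y * (g x - g y)))"
    proof (intro sum.cong refl)
      fix x assume x: "x \<in> BB"
      have "{y\<in>VV. adj mu x y} = N x" using N_VV[OF x] by auto
      then show "(\<Sum>y\<in>{y\<in>VV. adj mu x y}. mu x y * u x * (g x - g y)) = u x * (\<Sum>y\<in>N x. mu x y * (g x - g y))"
        by (simp add: sum_distrib_left algebra_simps)
    qed
    finally show ?thesis .
  qed
  also have "\<dots> = (\<Sum>x\<in>BB. u x * (if x = v0 then 1 else 0))"
    using Lap by (intro sum.cong) auto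
  also have "\<dots> = u v0" using finB v0B by (simp add: if_distrib sum.delta cong: if_cong)
  finally show ?thesis by simp
qed

lemma cut_decomp:
  "(\<Sum>(x,y)\<in>PP. mu x y * ((if x \<in> K then \<phi> x else 0) - (if y \<in> K then \<phi> y else 0)) * (h x - h y))
   = (\<Sum>(x,y)\<in>PP. if x \<in> K \<and> y \<in> K then mu x y * (\<phi> x - \<phi> y) * (h x - h y) else 0)
     + 2 * (\<Sum>(x,y)\<in>PP. if x \<in> K \<and> y \<notin> K then mu x y * \<phi> x * (h x - h y) else 0)"
proof -
  have "(\<Sum>(x,y)\<in>PP. mu x y * ((if x \<in> K then \<phi> x else 0) - (if y \<in> K then \<phi> y else 0)) * (h x - h y))
    = (\<Sum>(x,y)\<in>PP. if x \<in> K \<and> y \<in> K then mu x y * (\<phi> x - \<phi> y) * (h x - h y) else 0)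
      + (\<Sum>(x,y)\<in>PP. if x \<in> K \<and> y \<notin> K then mu x y * \<phi> x * (h x - h y) else 0)
      + (\<Sum>(x,y)\<in>PP. if x \<notin> K \<and> y \<in> K then - (mu x y * \<phi> y * (h x - h y)) else 0)"
    by (simp add: sum.distrib[symmetric] case_prod_beta algebra_simps) (intro sum.cong, auto simp: algebra_simps)
  also have "(\<Sum>(x,y)\<in>PP. if x \<notin> K \<and> y \<in> K then - (mu x y * \<phi> y * (h x - h y)) else 0)
     = (\<Sum>(x,y)\<in>PP. if x \<in> K \<and> y \<notin> K then mu x y * \<phi> x * (h x - h y) else 0)"
    by (subst sum_swap_PP) (intro sum.cong, auto simp: mu_sym algebra_simps)
  finally show ?thesis by simp
qed

end

context wgR
begin

definition ES :: "nat \<Rightarrow> ('a \<Rightarrow> 'a \<Rightarrow> real) \<Rightarrow> real" where "ES j F = (\<Sum>p\<in>PP. if d (fst p) = j \<and> d (snd p) = Suc j then F (fst p) (snd p) else 0)"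

lemma PP_d: "(x,y) \<in> PP \<Longrightarrow> d y \<le> Suc (d x) \<and> d x \<le> Suc (d y) \<and> d x \<le> Suc R \<and> d y \<le> Suc R"
  unfolding PP_iff gball_def using d_adj d_adj2 by auto

lemma level_split:
  "(\<Sum>(x,y)\<in>PP. F x y) = (\<Sum>(x,y)\<in>PP. if d x = d y then F x y else 0)
     + (\<Sum>j\<le>R. ES j F + ES j (\<lambda>x y. F y x))"
proof -
  have pw: "F x y = (if d x = d y then F x y else 0)
      + (\<Sum>j\<le>R. (if d x = j \<and> d y = Suc j then F x y else 0))
      + (\<Sum>j\<le>R. (if d y = j \<and> d x = Suc j then F x y else 0))" if "(x,y) \<in> PP" for x y
  proof -
    have a: "(\<Sum>j\<le>R. (if d x = j \<and> d y = Suc j then F x y else 0)) = (if d y = Suc (d x) then F x y else 0)"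
    proof -
      have "(\<Sum>j\<le>R. (if d x = j \<and> d y = Suc j then F x y else 0)) = (\<Sum>j\<le>R. if j = d x then (if d y = Suc (d x) then F x y else 0) else 0)"
        by (intro sum.cong) auto
      also have "\<dots> = (if d y = Suc (d x) then F x y else 0)" using PP_d[OF that] by (simp add: sum.delta)
      finally show ?thesis .
    qed
    have b: "(\<Sum>j\<le>R. (if d y = j \<and> d x = Suc j then F x y else 0)) = (if d x = Suc (d y) then F x y else 0)"
    proof -
      have "(\<Sum>j\<le>R. (if d y = j \<and> d x = Suc j then F x y else 0)) = (\<Sum>j\<le>R. if j = d y then (if d x = Suc (d y) then F x y else 0) else 0)"
        by (intro sum.cong) auto
      also have "\<dots> = (if d x = Suc (d y) then F x y else 0)" using PP_d[OF that] by (simp add: sum.delta)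
      finally show ?thesis .
    qed
    show ?thesis unfolding a b using PP_d[OF that] by auto
  qed
  have "(\<Sum>(x,y)\<in>PP. F x y) = (\<Sum>(x,y)\<in>PP. (if d x = d y then F x y else 0)
      + (\<Sum>j\<le>R. (if d x = j \<and> d y = Suc j then F x y else 0))
      + (\<Sum>j\<le>R. (if d y = j \<and> d x = Suc j then F x y else 0)))"
    using pw by (intro sum.cong) auto
  also have "\<dots> = (\<Sum>(x,y)\<in>PP. if d x = d y then F x y else 0)
      + (\<Sum>(x,y)\<in>PP. \<Sum>j\<le>R. (if d x = j \<and> d y = Suc j then F x y else 0))
      + (\<Sum>(x,y)\<in>PP. \<Sum>j\<le>R. (if d y = j \<and> d x = Suc j then F x y else 0))"
    by (simp add: sum.distrib case_prod_beta)
  also have "(\<Sum>(x,y)\<in>PP. \<Sum>j\<le>R. (if d x = j \<and> d y = Suc j then F x y else 0)) = (\<Sum>j\<le>R. ES j F)"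
    unfolding ES_def case_prod_beta by (rule sum.swap)
  also have "(\<Sum>(x,y)\<in>PP. \<Sum>j\<le>R. (if d y = j \<and> d x = Suc j then F x y else 0))
      = (\<Sum>(x,y)\<in>PP. \<Sum>j\<le>R. (if d x = j \<and> d y = Suc j then F y x else 0))"
    by (subst sum_swap_PP) simp
  also have "\<dots> = (\<Sum>j\<le>R. ES j (\<lambda>x y. F y x))"
    unfolding ES_def case_prod_beta by (rule sum.swap)
  finally show ?thesis by (simp add: sum.distrib add.assoc)
qed

lemma ES_eq_set: "ES j F = (\<Sum>(x,y)\<in>{p\<in>PP. d (fst p) = j \<and> d (snd p) = Suc j}. F x y)"
  unfolding ES_def using finPP by (simp add: sum.inter_filter[symmetric] case_prod_beta)

lemma bcond_ES: assumes "j \<le> R" shows "bcond mu v0 j = ES j mu"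
proof -
  have "{(x,y). x \<in> gball mu v0 j \<and> y \<notin> gball mu v0 j \<and> adj mu x y} = {p\<in>PP. d (fst p) = j \<and> d (snd p) = Suc j}"
  proof -
    have "(x \<in> gball mu v0 j \<and> y \<notin> gball mu v0 j \<and> adj mu x y) \<longleftrightarrow> ((x,y) \<in> PP \<and> d x = j \<and> d y = Suc j)" for x y
      using d_adj[of x y] assms by (auto simp: PP_iff gball_def)
    then show ?thesis by auto
  qed
  then show ?thesis unfolding bcond_def ES_eq_set by simp
qed

lemma ES_nonneg: "(\<And>x y. (x,y) \<in> PP \<Longrightarrow> F x y \<ge> 0) \<Longrightarrow> ES j F \<ge> 0"
  unfolding ES_def by (intro sum_nonneg) (auto split: prod.splits)

lemma ES_mono: "(\<And>x y. (x,y) \<in> PP \<Longrightarrow> d x = j \<Longrightarrow> d y = Suc j \<Longrightarrow> F x y \<le> G x y) \<Longrightarrow> ES j F \<le> ES j G"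
  unfolding ES_def by (intro sum_mono) (auto split: prod.splits)

lemma ES_add: "ES j (\<lambda>x y. F x y + G x y) = ES j F + ES j G"
  unfolding ES_def by (simp add: sum.distrib[symmetric]) (intro sum.cong, auto)

lemma ES_cmult: "ES j (\<lambda>x y. c * F x y) = c * ES j F"
  unfolding ES_def by (simp add: sum_distrib_left) (intro sum.cong, auto)

lemma ES_diff: "ES j (\<lambda>x y. F x y - G x y) = ES j F - ES j G"
  unfolding ES_def by (simp add: sum_subtractf[symmetric]) (intro sum.cong, auto)

lemma ES_cong: "(\<And>x y. (x,y) \<in> PP \<Longrightarrow> d x = j \<Longrightarrow> d y = Suc j \<Longrightarrow> F x y = G x y) \<Longrightarrow> ES j F = ES j G"
  unfolding ES_def by (intro sum.cong) (auto split: prod.splits)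

lemma flux: assumes "k \<le> R" shows "ES k (\<lambda>x y. mu x y * (g x - g y)) = 1"
proof -
  let ?K = "gball mu v0 k"
  have u: "z \<notin> BB \<Longrightarrow> (if z \<in> ?K then 1 else 0) = (0::real)" for z
    using assms unfolding gball_def by auto
  have "2 * (if v0 \<in> ?K then 1 else 0) = (\<Sum>(x,y)\<in>PP. mu x y * ((if x \<in> ?K then 1 else 0) - (if y \<in> ?K then 1 else 0)) * (g x - g y))"
    using green_identity[of "\<lambda>z. if z \<in> ?K then 1 else 0", OF u] by simp
  also have "\<dots> = 2 * (\<Sum>(x,y)\<in>PP. if x \<in> ?K \<and> y \<notin> ?K then mu x y * 1 * (g x - g y) else 0)"
  proof -
    have "(\<Sum>(x,y)\<in>PP. if x \<in> ?K \<and> y \<in> ?K then mu x y * (1 - 1) * (g x - g y) else 0) = 0"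
      by (intro sum.neutral) auto
    then show ?thesis using cut_decomp[of ?K "\<lambda>_. 1" g] by simp
  qed
  also have "(\<Sum>(x,y)\<in>PP. if x \<in> ?K \<and> y \<notin> ?K then mu x y * 1 * (g x - g y) else 0) = ES k (\<lambda>x y. mu x y * (g x - g y))"
    unfolding ES_def case_prod_beta
  proof (intro sum.cong refl)
    fix p assume "p \<in> PP"
    then obtain x y where p: "p = (x,y)" "(x,y) \<in> PP" by (cases p) auto
    have "(x \<in> ?K \<and> y \<notin> ?K) \<longleftrightarrow> (d x = k \<and> d y = Suc k)"
      using PP_d[OF p(2)] unfolding gball_def by auto
    then show "(if fst p \<in> ?K \<and> snd p \<notin> ?K then mu (fst p) (snd p) * 1 * (g (fst p) - g (snd p)) else 0) =
         (if d (fst p) = k \<and> d (snd p) = Suc k then mu (fst p) (snd p) * (g (fst p) - g (snd p)) else 0)" using p by simp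
  qed
  finally show ?thesis unfolding gball_def by simp
qed

lemma exists_cross: "(adj mu)\<^sup>*\<^sup>* a b \<Longrightarrow> a \<in> S \<Longrightarrow> b \<notin> S \<Longrightarrow> \<exists>x y. x \<in> S \<and> y \<notin> S \<and> adj mu x y"
  by (induction rule: rtranclp_induct) auto

lemma bcond_pos: assumes "k \<le> R" shows "bcond mu v0 k > 0"
proof -
  obtain w where w: "w \<notin> gball mu v0 k" using ball_finite inf by (metis UNIV_I ex_new_if_finite)
  have "(adj mu)\<^sup>*\<^sup>* v0 w" using conn unfolding connected_graph_def by auto
  then obtain x y where xy: "x \<in> gball mu v0 k" "y \<notin> gball mu v0 k" "adj mu x y"
    using exists_cross[of v0 w "gball mu v0 k"] w unfolding gball_def by auto
  have fin: "finite {(x,y). x \<in> gball mu v0 k \<and> y \<notin> gball mu v0 k \<and> adj mu x y}"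
    by (rule finite_subset[of _ "SIGMA x:gball mu v0 k. N x"]) (use ball_finite fin_N in auto)
  have "mu x y \<le> bcond mu v0 k" unfolding bcond_def
    using member_le_sum[OF _ _ fin, of "(x,y)" "\<lambda>(x,y). mu x y"] xy mu_nn by auto
  then show ?thesis using xy(3) unfolding adj_def by simp
qed

definition f where "f n = (\<Sum>k=n..R. 1 / bcond mu v0 k)"

lemma f_Suc: "n \<le> R \<Longrightarrow> f n = 1 / bcond mu v0 n + f (Suc n)"
  unfolding f_def by (simp add: sum.atLeast_Suc_atMost)

lemma f_nn: "f n \<ge> 0" unfolding f_def by (intro sum_nonneg) (simp add: bcond_pos less_imp_le)

lemma CS_level: assumes "j \<le> R" shows "ES j (\<lambda>x y. mu x y * (g x - g y)^2) \<ge> 1 / bcond mu v0 j"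
proof -
  let ?S = "{p\<in>PP. d (fst p) = j \<and> d (snd p) = Suc j}"
  have "1 = (\<Sum>p\<in>?S. sqrt (mu (fst p) (snd p)) * (sqrt (mu (fst p) (snd p)) * (g (fst p) - g (snd p))))^2"
    using flux[OF assms] unfolding ES_eq_set by (simp add: case_prod_beta mu_nn real_sqrt_mult[symmetric] mult.assoc[symmetric])
  also have "\<dots> \<le> (\<Sum>p\<in>?S. (sqrt (mu (fst p) (snd p)))^2) * (\<Sum>p\<in>?S. (sqrt (mu (fst p) (snd p)) * (g (fst p) - g (snd p)))^2)"
    by (rule Cauchy_Schwarz_ineq_sum)
  also have "\<dots> = bcond mu v0 j * ES j (\<lambda>x y. mu x y * (g x - g y)^2)"
    unfolding bcond_ES[OF assms] ES_eq_set by (simp add: case_prod_beta mu_nn power_mult_distrib)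
  finally show ?thesis using bcond_pos[OF assms] by (simp add: field_simps)
qed

end

lemma powr_cont: "p > 0 \<Longrightarrow> 0 \<le> a \<Longrightarrow> continuous_on {a..b} (\<lambda>x::real. x powr p)"
  by (intro continuous_on_powr') (auto intro: continuous_intros)

lemma powr_mvt:
  fixes a b p :: real
  assumes "0 \<le> a" "a < b" "p > 0"
  shows "\<exists>z. a < z \<and> z < b \<and> b powr p - a powr p = (b - a) * (p * z powr (p - 1))"
proof -
  have "\<exists>l z. a < z \<and> z < b \<and> ((\<lambda>x. x powr p) has_real_derivative l) (at z) \<and> b powr p - a powr p = (b - a) * l"
  proof (rule MVT)
    show "continuous_on {a..b} (\<lambda>x. x powr p)" using powr_cont assms by auto
    show "(\<lambda>x. x powr p) differentiable at x" if "a < x" "x < b" for x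
      using has_real_derivative_powr[of x p] that assms real_differentiable_def by force
  qed (use assms in auto)
  then obtain l z where lz: "a < z" "z < b" "((\<lambda>x. x powr p) has_real_derivative l) (at z)" "b powr p - a powr p = (b - a) * l"
    by blast
  have "l = p * z powr (p - 1)" using DERIV_unique[OF lz(3) has_real_derivative_powr[of z p]] lz(1) assms by simp
  then show ?thesis using lz by blast
qed

lemma convex_K1:
  fixes a b c p :: real
  assumes "p \<ge> 1" "0 < c" "c \<le> a" "a \<le> b"
  shows "b powr p - a powr p \<ge> (p * c powr (p - 1)) * (b - a)"
proof (cases "a = b")
  case False
  then have "a < b" using assms by simp
  then obtain z where z: "a < z" "z < b" "b powr p - a powr p = (b - a) * (p * z powr (p - 1))"
    using powr_mvt[of a b p] assms by auto
  have "c powr (p - 1) \<le> z powr (p - 1)" using assms z by (intro powr_mono2) auto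
  then show ?thesis unfolding z(3) using assms z by (simp add: mult_left_mono mult.commute)
qed simp

lemma convex_K2:
  fixes a b c p :: real
  assumes "p \<ge> 1" "0 \<le> a" "a \<le> b" "b \<le> c"
  shows "b powr p - a powr p \<le> (p * c powr (p - 1)) * (b - a)"
proof (cases "a = b")
  case False
  then have "a < b" using assms by simp
  then obtain z where z: "a < z" "z < b" "b powr p - a powr p = (b - a) * (p * z powr (p - 1))"
    using powr_mvt[of a b p] assms by auto
  have "z powr (p - 1) \<le> c powr (p - 1)" using assms z by (intro powr_mono2) auto
  then show ?thesis unfolding z(3) using assms z by (simp add: mult_left_mono mult.commute)
qed simp

locale src =
  fixes I :: "'i set" and w v :: "'i \<Rightarrow> real" and top \<phi> :: real
  assumes finI: "finite I" and v_nn: "\<And>i. i \<in> I \<Longrightarrow> v i \<ge> 0" and top_nn: "top \<ge> 0"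
    and mono_bd: "\<And>F. mono_on {0..} F \<Longrightarrow> F 0 = 0 \<Longrightarrow>
         0 \<le> (\<Sum>i\<in>I. w i * F (v i)) \<and> (\<Sum>i\<in>I. w i * F (v i)) \<le> F top"
    and tot: "(\<Sum>i\<in>I. w i) = 1"
    and energy: "(\<Sum>i\<in>I. w i * v i) \<ge> \<phi>"
    and phi_pos: "\<phi> > 0"
begin

definition S where "S F = (\<Sum>i\<in>I. w i * F (v i))"

lemma S_add: "S (\<lambda>s. F s + G s) = S F + S G" unfolding S_def by (simp add: sum.distrib algebra_simps)
lemma S_cmult: "S (\<lambda>s. c * F s) = c * S F" unfolding S_def by (simp add: sum_distrib_left algebra_simps)
lemma S_cong: "(\<And>s. s \<ge> 0 \<Longrightarrow> F s = G s) \<Longrightarrow> S F = S G" unfolding S_def using v_nn by (intro sum.cong) auto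

lemma S_lower: "mono_on {0..} F \<Longrightarrow> F 0 = 0 \<Longrightarrow> S F \<ge> 0" using mono_bd unfolding S_def by blast
lemma S_upper: "mono_on {0..} F \<Longrightarrow> F 0 = 0 \<Longrightarrow> S F \<le> F top" using mono_bd unfolding S_def by blast

theorem convex_T1:
  assumes p: "p \<ge> 1"
  shows "S (\<lambda>s. s powr p) \<ge> \<phi> powr p"
proof -
  define G where "G s = s powr p" for s :: real
  define l where "l = p * \<phi> powr (p - 1)"
  define H where "H s = G s - l * s" for s
  define H1 where "H1 s = H (min s \<phi>)" for s
  define H2 where "H2 s = H (max s \<phi>) - H \<phi>" for s
  have l_nn: "l \<ge> 0" unfolding l_def using p by simp
  have decomp: "G s = l * s + H1 s + H2 s" if "s \<ge> 0" for s
    unfolding H1_def H2_def H_def by (cases "s \<le> \<phi>") (auto simp: max_def min_def)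
  have K1: "H a \<le> H b" if "\<phi> \<le> a" "a \<le> b" for a b
    using convex_K1[OF p phi_pos that] unfolding H_def G_def l_def by (simp add: algebra_simps)
  have K2: "H b \<le> H a" if "0 \<le> a" "a \<le> b" "b \<le> \<phi>" for a b
    using convex_K2[OF p that] unfolding H_def G_def l_def by (simp add: algebra_simps)
  have monoH2: "mono_on {0..} H2"
    unfolding H2_def by (intro mono_onI) (auto intro!: K1 simp: max_def)
  have H2_0: "H2 0 = 0" unfolding H2_def using phi_pos by (simp add: max_def)
  have monoH1: "mono_on {0..} (\<lambda>s. - H1 s)"
    unfolding H1_def by (intro mono_onI) (use phi_pos in \<open>auto intro!: K2 simp: min_def\<close>)
  have H1_0: "H1 0 = 0" unfolding H1_def H_def G_def using phi_pos by (simp add: min_def)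
  have eq: "S G = l * S (\<lambda>s. s) + S H1 + S H2"
  proof -
    have "S G = S (\<lambda>s. l * s + H1 s + H2 s)" by (rule S_cong) (rule decomp)
    also have "\<dots> = l * S (\<lambda>s. s) + S H1 + S H2" by (simp add: S_add S_cmult)
    finally show ?thesis .
  qed
  have a: "S H2 \<ge> 0" by (rule S_lower[OF monoH2 H2_0])
  have b: "S H1 \<ge> H1 top"
  proof -
    have "S (\<lambda>s. - H1 s) \<le> - H1 top" using S_upper[OF monoH1] H1_0 by simp
    moreover have "S (\<lambda>s. - H1 s) = - S H1" using S_cmult[of "-1" H1] by simp
    ultimately show ?thesis by simp
  qed
  have c: "H1 top \<ge> H \<phi>" unfolding H1_def using K2[of "min top \<phi>" \<phi>] top_nn phi_pos by auto
  have e: "S (\<lambda>s. s) \<ge> \<phi>" using energy unfolding S_def by simp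
  have "l * S (\<lambda>s. s) \<ge> l * \<phi>" using e l_nn by (simp add: mult_left_mono)
  then have "S G \<ge> l * \<phi> + H \<phi>" using eq a b c by linarith
  then show ?thesis unfolding H_def G_def by simp
qed

end

lemma telescope: "(\<Sum>j<n. f (Suc j) - f j) = f n - (f 0 :: real)"
  by (induction n) auto

lemma keyK:
  fixes p u v :: real
  assumes p: "p > 0" and u: "0 \<le> u" and uv: "u \<le> v"
  shows "sqrt u * (v powr p - u powr p) \<le> (p/(p+1/2)) * (v powr (p+1/2) - u powr (p+1/2))"
proof -
  define h where "h s = (p/(p+1/2)) * (s powr (p+1/2) - u powr (p+1/2)) - sqrt u * (s powr p - u powr p)" for s
  have "h u \<le> h v"
  proof (rule DERIV_nonneg_imp_increasing_open[OF uv])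
    fix s assume s: "u < s" "s < v"
    then have s0: "s > 0" using u by simp
    have D: "(h has_real_derivative (p/(p+1/2)) * ((p+1/2) * s powr (p+1/2-1) - 0) - sqrt u * (p * s powr (p - 1) - 0)) (at s)"
      unfolding h_def
      by (intro DERIV_diff DERIV_cmult has_real_derivative_powr[OF s0] DERIV_const)
    have eq: "s powr (p+1/2-1) = s powr (p - 1) * sqrt s"
      using s0 by (simp add: powr_add[symmetric] powr_half_sqrt[symmetric])
    have "sqrt u \<le> sqrt s" using s by simp
    moreover have "s powr (p - 1) \<ge> 0" by simp
    ultimately have nn: "0 \<le> p * (s powr (p - 1) * (sqrt s - sqrt u))" using p by simp
    have c1: "(p/(p+1/2)) * ((p+1/2) * s powr (p+1/2-1) - 0) = p * (s powr (p - 1) * sqrt s)"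
      using p unfolding eq by simp
    have "0 \<le> (p/(p+1/2)) * ((p+1/2) * s powr (p+1/2-1) - 0) - sqrt u * (p * s powr (p - 1) - 0)"
      using nn unfolding c1 by (simp add: algebra_simps)
    then show "\<exists>y. (h has_real_derivative y) (at s) \<and> 0 \<le> y" using D by (intro exI[of _ "(p/(p+1/2)) * ((p+1/2) * s powr (p+1/2-1) - 0) - sqrt u * (p * s powr (p - 1) - 0)"]) simp
  next
    show "continuous_on {u..v} h" unfolding h_def using p u
      by (intro continuous_intros continuous_on_powr') auto
  qed
  moreover have "h u = 0" unfolding h_def by simp
  ultimately show ?thesis unfolding h_def by simp
qed

locale src_lv = src +
  assumes level: "\<And>t. t \<ge> 0 \<Longrightarrow> (\<Sum>i\<in>{i\<in>I. v i \<le> t}. w i) \<le> sqrt (t / \<phi>)"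
begin

theorem concave_T1:
  assumes p: "0 < p"
  shows "S (\<lambda>s. s powr p) \<ge> \<phi> powr p / (2*p+1)"
proof -
  define G where "G s = s powr p" for s :: real
  define c where "c = p/(p+1/2)"
  define \<Psi> where "\<Psi> s = G s - c * s powr (p+1/2) / sqrt \<phi>" for s
  define xs where "xs = sorted_list_of_set (v ` I)"
  define M where "M = length xs"
  define a where "a j = (if j = 0 then 0 else xs ! (j - 1))" for j
  have set_xs: "set xs = v ` I" unfolding xs_def using finI by simp
  have sw: "sorted_wrt (<) xs" unfolding xs_def by (rule strict_sorted_list_of_set)
  have lt: "i < j \<Longrightarrow> j < M \<Longrightarrow> xs ! i < xs ! j" for i j
    using sorted_wrt_nth_less[OF sw] unfolding M_def by blast
  have le_iff: "i < M \<Longrightarrow> j < M \<Longrightarrow> xs ! i \<le> xs ! j \<longleftrightarrow> i \<le> j" for i j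
    using lt[of i j] lt[of j i] by (cases i j rule: linorder_cases) auto
  have aS: "a (Suc j) = xs ! j" for j unfolding a_def by simp
  have vi: "\<exists>j0<M. v i = xs ! j0" if "i \<in> I" for i
    using that set_xs unfolding M_def by (metis imageI in_set_conv_nth)
  have xs_nn: "j < M \<Longrightarrow> xs ! j \<ge> 0" for j using set_xs v_nn unfolding M_def by (metis imageE nth_mem)
  have a_nn: "a j \<ge> 0" if "j \<le> M" for j using xs_nn that unfolding a_def by auto
  have a_mono: "a j \<le> a (Suc j)" if "j < M" for j
    using that xs_nn lt[of "j - 1" j] unfolding a_def by (cases j) auto
  have G0: "G 0 = 0" unfolding G_def by simp
  (* pointwise Abel decomposition *)
  have pw: "G (v i) = (\<Sum>j<M. if a (Suc j) \<le> v i then G (a (Suc j)) - G (a j) else 0)" if i: "i \<in> I" for i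
  proof -
    obtain j0 where j0: "j0 < M" "v i = xs ! j0" using vi[OF i] by blast
    have "(\<Sum>j<M. if a (Suc j) \<le> v i then G (a (Suc j)) - G (a j) else 0)
        = (\<Sum>j<M. if j < Suc j0 then G (a (Suc j)) - G (a j) else 0)"
      using j0 le_iff by (intro sum.cong refl) (auto simp: aS)
    also have "\<dots> = (\<Sum>j\<in>{..<M} \<inter> {..<Suc j0}. G (a (Suc j)) - G (a j))"
      by (simp add: sum.inter_restrict)
    also have "{..<M} \<inter> {..<Suc j0} = {..<Suc j0}" using j0 by auto
    also have "(\<Sum>j<Suc j0. G (a (Suc j)) - G (a j)) = G (a (Suc j0)) - G (a 0)" by (rule telescope)
    finally show ?thesis using j0 G0 by (simp add: aS a_def)
  qed
  define T where "T j = S (\<lambda>s. if a (Suc j) \<le> s then 1 else 0)" for j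
  have SG: "S G = (\<Sum>j<M. (G (a (Suc j)) - G (a j)) * T j)"
  proof -
    have "S G = (\<Sum>i\<in>I. w i * (\<Sum>j<M. if a (Suc j) \<le> v i then G (a (Suc j)) - G (a j) else 0))"
      unfolding S_def using pw by (intro sum.cong) auto
    also have "\<dots> = (\<Sum>j<M. \<Sum>i\<in>I. w i * (if a (Suc j) \<le> v i then G (a (Suc j)) - G (a j) else 0))"
      by (simp add: sum_distrib_left) (rule sum.swap)
    also have "\<dots> = (\<Sum>j<M. (G (a (Suc j)) - G (a j)) * T j)"
      unfolding T_def S_def by (intro sum.cong refl) (simp add: sum_distrib_left if_distrib mult.commute mult.left_commute cong: if_cong)
    finally show ?thesis .
  qed
  have T_nn: "T j \<ge> 0" if "a j < a (Suc j)" "j < M" for j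
  proof -
    have "a (Suc j) > 0" using that a_nn[of j] by simp
    then show ?thesis unfolding T_def by (intro S_lower) (auto intro!: mono_onI)
  qed
  have T_lb: "T j \<ge> 1 - sqrt (a j / \<phi>)" if j: "j < M" for j
  proof -
    have Tj_eq: "T j = (\<Sum>i\<in>I. w i) - (\<Sum>i\<in>{i\<in>I. v i < a (Suc j)}. w i)"
    proof -
      have "T j = (\<Sum>i\<in>I. w i - (if v i < a (Suc j) then w i else 0))"
        unfolding T_def S_def by (intro sum.cong) auto
      also have "\<dots> = (\<Sum>i\<in>I. w i) - (\<Sum>i\<in>{i\<in>I. v i < a (Suc j)}. w i)"
        using finI by (simp add: sum_subtractf sum.inter_filter)
      finally show ?thesis .
    qed
    show ?thesis
    proof (cases j)
      case 0
      have "{i\<in>I. v i < a (Suc j)} = {}"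
      proof -
        have "\<not> v i < xs ! 0" if iI: "i \<in> I" for i
        proof -
          obtain j0 where "j0 < M" "v i = xs ! j0" using vi[OF iI] by blast
          then show ?thesis using le_iff[of 0 j0] by auto
        qed
        then show ?thesis using 0 by (auto simp: aS)
      qed
      then have "T j = 1" using Tj_eq tot by (simp del: Collect_empty_eq)
      then show ?thesis using 0 phi_pos by (simp add: a_def)
    next
      case (Suc j')
      have "{i\<in>I. v i < a (Suc j)} = {i\<in>I. v i \<le> a j}"
      proof -
        have "v i < xs ! j \<longleftrightarrow> v i \<le> xs ! j'" if iI: "i \<in> I" for i
        proof -
          obtain j0 where "j0 < M" "v i = xs ! j0" using vi[OF iI] by blast
          then show ?thesis using le_iff[of j0 j] le_iff[of j0 j'] lt[of j0 j] j Suc by (cases "j0 = j") auto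
        qed
        then show ?thesis using Suc by (auto simp: aS a_def)
      qed
      then show ?thesis using Tj_eq tot level[OF a_nn[of j]] j by simp
    qed
  qed
  have perint: "(G vv - G u) * max 0 (1 - sqrt (u / \<phi>)) \<ge> \<Psi> (min vv \<phi>) - \<Psi> (min u \<phi>)"
    if u: "0 \<le> u" "u \<le> vv" for u vv
  proof (cases "u \<ge> \<phi>")
    case True
    have "G u \<le> G vv" unfolding G_def using u p by (intro powr_mono2) auto
    then show ?thesis using True u by simp
  next
    case False
    define v' where "v' = min vv \<phi>"
    have v': "u \<le> v'" "v' \<le> vv" "v' \<le> \<phi>" "v' \<ge> 0" using False u unfolding v'_def by auto
    have m: "max 0 (1 - sqrt (u / \<phi>)) = 1 - sqrt u / sqrt \<phi>"
      using False u phi_pos by (simp add: real_sqrt_divide divide_le_eq_1)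
    have Gm: "G v' \<le> G vv" "G u \<le> G v'" unfolding G_def using v' u p by (auto intro: powr_mono2)
    have f1: "1 - sqrt u / sqrt \<phi> \<ge> 0" using m by (metis max.cobounded1)
    have "(G v' - G u) * (1 - sqrt u / sqrt \<phi>) \<le> (G vv - G u) * (1 - sqrt u / sqrt \<phi>)"
      using Gm f1 by (intro mult_right_mono) auto
    moreover have "\<Psi> v' - \<Psi> u \<le> (G v' - G u) * (1 - sqrt u / sqrt \<phi>)"
    proof -
      have K: "sqrt u * (G v' - G u) \<le> c * (v' powr (p+1/2) - u powr (p+1/2))"
        unfolding G_def c_def using keyK[OF p u(1) v'(1)] .
      have "\<Psi> v' - \<Psi> u = (G v' - G u) - c * (v' powr (p+1/2) - u powr (p+1/2)) / sqrt \<phi>"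
        unfolding \<Psi>_def by (simp add: diff_divide_distrib right_diff_distrib)
      also have "\<dots> \<le> (G v' - G u) - sqrt u * (G v' - G u) / sqrt \<phi>"
        using K phi_pos by (simp add: divide_right_mono)
      also have "\<dots> = (G v' - G u) * (1 - sqrt u / sqrt \<phi>)" by (simp add: field_simps)
      finally show ?thesis .
    qed
    moreover have "min u \<phi> = u" using False by simp
    ultimately show ?thesis unfolding m v'_def by linarith
  qed
  have termb: "(G (a (Suc j)) - G (a j)) * T j \<ge> \<Psi> (min (a (Suc j)) \<phi>) - \<Psi> (min (a j) \<phi>)" if j: "j < M" for j
  proof (cases "a j = a (Suc j)")
    case True then show ?thesis by simp
  next
    case False
    then have lt': "a j < a (Suc j)" using a_mono[OF j] by simp
    have "T j \<ge> max 0 (1 - sqrt (a j / \<phi>))" using T_nn[OF lt' j] T_lb[OF j] by simp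
    moreover have "G (a (Suc j)) - G (a j) \<ge> 0" unfolding G_def using lt' a_nn[of j] j p
      by (simp add: powr_mono2)
    ultimately have "(G (a (Suc j)) - G (a j)) * T j \<ge> (G (a (Suc j)) - G (a j)) * max 0 (1 - sqrt (a j / \<phi>))"
      by (simp add: mult_left_mono)
    moreover have "(G (a (Suc j)) - G (a j)) * max 0 (1 - sqrt (a j / \<phi>)) \<ge> \<Psi> (min (a (Suc j)) \<phi>) - \<Psi> (min (a j) \<phi>)"
      using perint[of "a j" "a (Suc j)"] a_nn[of j] j lt' by simp
    ultimately show ?thesis by linarith
  qed
  have "S G \<ge> (\<Sum>j<M. \<Psi> (min (a (Suc j)) \<phi>) - \<Psi> (min (a j) \<phi>))"
    unfolding SG by (intro sum_mono termb) auto
  also have "(\<Sum>j<M. \<Psi> (min (a (Suc j)) \<phi>) - \<Psi> (min (a j) \<phi>)) = \<Psi> (min (a M) \<phi>) - \<Psi> (min (a 0) \<phi>)"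
    by (rule telescope)
  also have "min (a M) \<phi> = \<phi>"
  proof -
    have M1: "M \<ge> 1"
    proof (rule ccontr)
      assume "\<not> M \<ge> 1"
      then have "xs = []" unfolding M_def by (cases xs) auto
      then have "I = {}" using set_xs by simp
      then show False using tot by simp
    qed
    have all: "v i \<le> a M" if iI: "i \<in> I" for i
    proof -
      obtain j0 where "j0 < M" "v i = xs ! j0" using vi[OF iI] by blast
      then show ?thesis using le_iff[of j0 "M - 1"] M1 unfolding a_def by auto
    qed
    have amn: "a M \<ge> 0" using a_nn by simp
    have "S (\<lambda>s. min s (a M)) \<le> min top (a M)"
      using amn by (intro S_upper) (auto intro!: mono_onI)
    moreover have "S (\<lambda>s. min s (a M)) = S (\<lambda>s. s)" unfolding S_def using all by (intro sum.cong) auto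
    moreover have "S (\<lambda>s. s) \<ge> \<phi>" using energy unfolding S_def by simp
    ultimately have "\<phi> \<le> a M" by linarith
    then show ?thesis by simp
  qed
  also have "\<Psi> (min (a 0) \<phi>) = 0" unfolding \<Psi>_def G_def a_def using phi_pos by simp
  also have "\<Psi> \<phi> = \<phi> powr p / (2*p+1)"
  proof -
    have "\<phi> powr (p+1/2) = \<phi> powr p * sqrt \<phi>" using phi_pos by (simp add: powr_add powr_half_sqrt)
    then have "\<Psi> \<phi> = \<phi> powr p * (1 - c)" unfolding \<Psi>_def G_def using phi_pos by (simp add: field_simps)
    also have "1 - c = 1/(2*p+1)" unfolding c_def using p by (simp add: field_simps)
    finally show ?thesis by simp
  qed
  finally show ?thesis unfolding G_def by simp
qed

end

context wgR
begin

definition Ys where "Ys k F = ES k (\<lambda>x y. mu x y * (g x - g y) * F (g y))"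
definition Xs where "Xs k F = ES k (\<lambda>x y. mu x y * (g x - g y) * F (g x))"
definition Om :: "nat \<Rightarrow> ('a \<Rightarrow> 'a \<Rightarrow> real) \<Rightarrow> real" where "Om k H = (\<Sum>(x,y)\<in>PP. if d x > k \<and> d y > k then H x y else 0)"

lemma mono_term: "mono_on {0..} F \<Longrightarrow> mu x y * (F (g x) - F (g y)) * (g x - g y) \<ge> 0"
proof -
  assume F: "mono_on {0..} F"
  have "(F (g x) - F (g y)) * (g x - g y) \<ge> 0"
  proof (cases "g x \<le> g y")
    case True
    then have "F (g x) \<le> F (g y)" using F g_nn by (intro mono_onD[OF F]) auto
    then show ?thesis using True by (simp add: mult_nonpos_nonpos)
  next
    case False
    then have "F (g y) \<le> F (g x)" using F g_nn by (intro mono_onD[OF F]) auto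
    then show ?thesis using False by simp
  qed
  then show ?thesis using mu_nn by (simp add: mult.assoc)
qed

lemma total: "F 0 = 0 \<Longrightarrow> (\<Sum>(x,y)\<in>PP. mu x y * (F (g x) - F (g y)) * (g x - g y)) = 2 * F (g v0)"
  by (rule green_identity) (simp add: g_out)

lemma Y_id: assumes F0: "F 0 = 0"
  shows "2 * Ys k F = Om k (\<lambda>x y. mu x y * (F (g x) - F (g y)) * (g x - g y))"
proof -
  let ?K = "{z. d z > k}"
  have u: "z \<notin> BB \<Longrightarrow> (if z \<in> ?K then F (g z) else 0) = 0" for z using F0 g_out by simp
  have "0 = (\<Sum>(x,y)\<in>PP. mu x y * ((if x \<in> ?K then F (g x) else 0) - (if y \<in> ?K then F (g y) else 0)) * (g x - g y))"
    using green_identity[OF u] by simp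
  also have "\<dots> = Om k (\<lambda>x y. mu x y * (F (g x) - F (g y)) * (g x - g y))
       + 2 * (\<Sum>(x,y)\<in>PP. if d x > k \<and> \<not> d y > k then mu x y * F (g x) * (g x - g y) else 0)"
    unfolding cut_decomp Om_def by simp
  also have "(\<Sum>(x,y)\<in>PP. if d x > k \<and> \<not> d y > k then mu x y * F (g x) * (g x - g y) else 0)
      = (\<Sum>(x,y)\<in>PP. if d y = k \<and> d x = Suc k then mu x y * F (g x) * (g x - g y) else 0)"
    by (intro sum.cong refl) (auto dest!: PP_d)
  also have "\<dots> = (\<Sum>(x,y)\<in>PP. if d x = k \<and> d y = Suc k then mu y x * F (g y) * (g y - g x) else 0)"
    by (subst sum_swap_PP) simp
  also have "\<dots> = - Ys k F"
    unfolding Ys_def ES_def case_prod_beta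
    by (simp add: sum_negf[symmetric]) (intro sum.cong refl, auto simp: mu_sym algebra_simps)
  finally show ?thesis by simp
qed

lemma Om_nonneg: "(\<And>x y. H x y \<ge> 0) \<Longrightarrow> Om k H \<ge> 0"
  unfolding Om_def by (intro sum_nonneg) auto

lemma three_le:
  fixes H :: "'a \<Rightarrow> 'a \<Rightarrow> real"
  assumes "\<And>x y. H x y \<ge> 0" "\<And>x y. (x,y) \<in> PP \<Longrightarrow> \<not> (A x y \<and> B x y)" "\<And>x y. (x,y) \<in> PP \<Longrightarrow> \<not> (A x y \<and> C x y)"
    "\<And>x y. (x,y) \<in> PP \<Longrightarrow> \<not> (B x y \<and> C x y)"
  shows "(\<Sum>(x,y)\<in>PP. if A x y then H x y else 0) + (\<Sum>(x,y)\<in>PP. if B x y then H x y else 0)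
       + (\<Sum>(x,y)\<in>PP. if C x y then H x y else 0) \<le> (\<Sum>(x,y)\<in>PP. H x y)"
proof -
  have "(\<Sum>(x,y)\<in>PP. if A x y then H x y else 0) + (\<Sum>(x,y)\<in>PP. if B x y then H x y else 0)
       + (\<Sum>(x,y)\<in>PP. if C x y then H x y else 0)
       = (\<Sum>(x,y)\<in>PP. (if A x y then H x y else 0) + (if B x y then H x y else 0) + (if C x y then H x y else 0))"
    by (simp add: sum.distrib case_prod_beta)
  also have "\<dots> \<le> (\<Sum>(x,y)\<in>PP. H x y)"
  proof (intro sum_mono)
    fix p assume "p \<in> PP"
    then obtain x y where p: "p = (x,y)" "(x,y) \<in> PP" by (cases p) auto
    show "(case p of (x, y) \<Rightarrow> (if A x y then H x y else 0) + (if B x y then H x y else 0) + (if C x y then H x y else 0))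
        \<le> (case p of (x, y) \<Rightarrow> H x y)"
      using assms(1)[of x y] assms(2-4)[OF p(2)] p(1) by auto
  qed
  finally show ?thesis .
qed

lemma ES_swap: "(\<Sum>(x,y)\<in>PP. if d y = k \<and> d x = Suc k then H x y else 0) = ES k (\<lambda>x y. H y x)"
  unfolding ES_def case_prod_beta by (subst sum_swap_PP[unfolded case_prod_beta]) simp

lemma ES_as_sum: "ES k H = (\<Sum>(x,y)\<in>PP. if d x = k \<and> d y = Suc k then H x y else 0)"
  unfolding ES_def case_prod_beta by simp

lemma Y_bounds: assumes F: "mono_on {0..} F" "F 0 = 0"
  shows "0 \<le> Ys k F" "Ys k F \<le> F (g v0)"
proof -
  let ?H = "\<lambda>x y. mu x y * (F (g x) - F (g y)) * (g x - g y)"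
  have H: "?H x y \<ge> 0" for x y by (rule mono_term[OF F(1)])
  have "Om k ?H \<ge> 0" using H by (rule Om_nonneg)
  then show "0 \<le> Ys k F" using Y_id[of F k, OF F(2)] by simp
  have "Om k ?H \<le> (\<Sum>(x,y)\<in>PP. ?H x y)"
    unfolding Om_def using H by (intro sum_mono) auto
  then show "Ys k F \<le> F (g v0)" using Y_id[of F k, OF F(2)] total[of F, OF F(2)] by simp
qed

lemma X_eq: "Xs k F = Ys k F + ES k (\<lambda>x y. mu x y * (F (g x) - F (g y)) * (g x - g y))"
  unfolding Xs_def Ys_def ES_add[symmetric] by (intro ES_cong) (simp add: algebra_simps)

lemma X_bounds: assumes F: "mono_on {0..} F" "F 0 = 0"
  shows "0 \<le> Xs k F" "Xs k F \<le> F (g v0)"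
proof -
  let ?H = "\<lambda>x y. mu x y * (F (g x) - F (g y)) * (g x - g y)"
  have H: "?H x y \<ge> 0" for x y by (rule mono_term[OF F(1)])
  have sym: "?H y x = ?H x y" for x y by (simp add: mu_sym algebra_simps)
  have E0: "ES k ?H \<ge> 0" using H by (intro ES_nonneg)
  show "0 \<le> Xs k F" using X_eq[of k F] Y_bounds(1)[OF F, of k] E0 by simp
  have "Om k ?H + ES k ?H + ES k ?H \<le> (\<Sum>(x,y)\<in>PP. ?H x y)"
  proof -
    have "(\<Sum>(x,y)\<in>PP. if d x > k \<and> d y > k then ?H x y else 0)
        + (\<Sum>(x,y)\<in>PP. if d x = k \<and> d y = Suc k then ?H x y else 0)
        + (\<Sum>(x,y)\<in>PP. if d y = k \<and> d x = Suc k then ?H x y else 0) \<le> (\<Sum>(x,y)\<in>PP. ?H x y)"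
      by (rule three_le) (use H in auto)
    moreover have "(\<Sum>(x,y)\<in>PP. if d y = k \<and> d x = Suc k then ?H x y else 0) = ES k ?H"
      unfolding ES_swap using sym by simp
    ultimately show ?thesis unfolding Om_def ES_as_sum by simp
  qed
  then show "Xs k F \<le> F (g v0)" using X_eq[of k F] Y_id[of F k, OF F(2)] total[of F, OF F(2)] by simp
qed

lemma Om_levels:
  assumes H: "\<And>x y. H x y \<ge> 0" "\<And>x y. H y x = H x y"
  shows "Om k H \<ge> 2 * (\<Sum>j\<in>{Suc k..R}. ES j H)"
proof -
  let ?H' = "\<lambda>x y. if d x > k \<and> d y > k then H x y else 0"
  have "Om k H = (\<Sum>(x,y)\<in>PP. ?H' x y)" unfolding Om_def by simp
  also have "\<dots> = (\<Sum>(x,y)\<in>PP. if d x = d y then ?H' x y else 0) + (\<Sum>j\<le>R. ES j ?H' + ES j (\<lambda>x y. ?H' y x))"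
    by (rule level_split)
  also have "\<dots> \<ge> (\<Sum>j\<le>R. ES j ?H' + ES j (\<lambda>x y. ?H' y x))"
    using H by (intro add_increasing sum_nonneg) auto
  also have "(\<Sum>j\<le>R. ES j ?H' + ES j (\<lambda>x y. ?H' y x)) \<ge> (\<Sum>j\<in>{Suc k..R}. ES j ?H' + ES j (\<lambda>x y. ?H' y x))"
    using H by (intro sum_mono2) (auto intro!: add_nonneg_nonneg ES_nonneg)
  also have "(\<Sum>j\<in>{Suc k..R}. ES j ?H' + ES j (\<lambda>x y. ?H' y x)) = (\<Sum>j\<in>{Suc k..R}. 2 * ES j H)"
  proof (intro sum.cong refl)
    fix j assume "j \<in> {Suc k..R}"
    then have "ES j ?H' = ES j H" "ES j (\<lambda>x y. ?H' y x) = ES j H"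
      using H(2) by (auto intro!: ES_cong)
    then show "ES j ?H' + ES j (\<lambda>x y. ?H' y x) = 2 * ES j H" by simp
  qed
  finally show ?thesis by (simp add: sum_distrib_left)
qed

lemma Y_energy: assumes "k \<le> R" shows "Ys k (\<lambda>s. s) \<ge> f (Suc k)"
proof -
  let ?H = "\<lambda>x y. mu x y * (g x - g y) * (g x - g y)"
  have H: "?H x y \<ge> 0" "?H y x = ?H x y" for x y
  proof -
    show "?H x y \<ge> 0" using mu_nn[of x y] by (simp add: mult.assoc)
    show "?H y x = ?H x y" by (simp add: mu_sym algebra_simps)
  qed
  have a: "2 * Ys k (\<lambda>s. s) = Om k ?H" using Y_id[of "\<lambda>s. s" k] by simp
  have b: "Om k ?H \<ge> 2 * (\<Sum>j\<in>{Suc k..R}. ES j ?H)" by (rule Om_levels) (use H in auto)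
  have c: "(\<Sum>j\<in>{Suc k..R}. ES j ?H) \<ge> (\<Sum>j\<in>{Suc k..R}. 1 / bcond mu v0 j)"
    using CS_level by (intro sum_mono) (auto simp: power2_eq_square mult.assoc)
  show ?thesis using a b c unfolding f_def by simp
qed

lemma X_energy: assumes "n \<le> R" shows "Xs n (\<lambda>s. s) \<ge> f n"
proof -
  have "Xs n (\<lambda>s. s) = Ys n (\<lambda>s. s) + ES n (\<lambda>x y. mu x y * (g x - g y) * (g x - g y))" by (rule X_eq)
  moreover have "ES n (\<lambda>x y. mu x y * (g x - g y) * (g x - g y)) \<ge> 1 / bcond mu v0 n"
    using CS_level[OF assms] by (simp add: power2_eq_square mult.assoc)
  ultimately show ?thesis using Y_energy[OF assms] f_Suc[OF assms] by simp
qed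

end

context wgR
begin

definition Phi where "Phi j t = ES j (\<lambda>x y. if g x \<le> t \<and> g y \<le> t then mu x y * (g x - g y) else 0)"
definition rhoY where "rhoY k t = ES k (\<lambda>x y. if g y \<le> t then mu x y * (g x - g y) else 0)"
definition rhoX where "rhoX k t = ES k (\<lambda>x y. if g x \<le> t then mu x y * (g x - g y) else 0)"

lemma Q_arg: assumes kj: "k < j" "j \<le> R" shows "rhoY k t \<le> Phi j t"
proof -
  let ?Q = "{z. k < d z \<and> d z \<le> j \<and> g z \<le> t}"
  have u: "z \<notin> BB \<Longrightarrow> (if z \<in> ?Q then 1 else 0) = (0::real)" for z using kj unfolding gball_def by auto
  have "0 = (\<Sum>(x,y)\<in>PP. mu x y * ((if x \<in> ?Q then 1 else 0) - (if y \<in> ?Q then 1 else 0)) * (g x - g y))"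
    using green_identity[OF u] by simp
  also have "\<dots> = 2 * (\<Sum>(x,y)\<in>PP. if x \<in> ?Q \<and> y \<notin> ?Q then mu x y * 1 * (g x - g y) else 0)"
  proof -
    have "(\<Sum>(x,y)\<in>PP. if x \<in> ?Q \<and> y \<in> ?Q then mu x y * (1 - 1) * (g x - g y) else 0) = 0"
      by (intro sum.neutral) auto
    then show ?thesis using cut_decomp[of ?Q "\<lambda>_. 1" g] by simp
  qed
  finally have zero: "(\<Sum>(x,y)\<in>PP. if x \<in> ?Q \<and> y \<notin> ?Q then mu x y * 1 * (g x - g y) else 0) = 0" by simp
  define A where "A x y = (if d y = k \<and> d x = Suc k \<and> g x \<le> t then mu x y * (g x - g y) else 0)" for x y
  define B where "B x y = (if x \<in> ?Q \<and> y \<notin> ?Q \<and> d y \<noteq> k \<and> g y > t then mu x y * (g x - g y) else 0)" for x y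
  define C where "C x y = (if d x = j \<and> d y = Suc j \<and> g x \<le> t \<and> g y \<le> t then mu x y * (g x - g y) else 0)" for x y
  have pw: "(if x \<in> ?Q \<and> y \<notin> ?Q then mu x y * 1 * (g x - g y) else 0) = A x y + B x y + C x y"
    if xy: "(x,y) \<in> PP" for x y
    using PP_d[OF xy] kj unfolding A_def B_def C_def by (auto simp: not_less)
  have "(\<Sum>(x,y)\<in>PP. if x \<in> ?Q \<and> y \<notin> ?Q then mu x y * 1 * (g x - g y) else 0)
      = (\<Sum>(x,y)\<in>PP. A x y + B x y + C x y)"
  proof (intro sum.cong refl)
    fix p assume "p \<in> PP"
    then obtain x y where p: "p = (x,y)" "(x,y) \<in> PP" by (cases p) auto
    show "(case p of (x, y) \<Rightarrow> if x \<in> ?Q \<and> y \<notin> ?Q then mu x y * 1 * (g x - g y) else 0)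
        = (case p of (x, y) \<Rightarrow> A x y + B x y + C x y)"
      unfolding p(1) using pw[OF p(2)] by (simp only: prod.case)
  qed
  then have "0 = (\<Sum>(x,y)\<in>PP. A x y) + (\<Sum>(x,y)\<in>PP. B x y) + (\<Sum>(x,y)\<in>PP. C x y)"
    using zero by (simp add: sum.distrib case_prod_beta)
  moreover have "(\<Sum>(x,y)\<in>PP. A x y) = - rhoY k t"
  proof -
    have "(\<Sum>(x,y)\<in>PP. A x y) = (\<Sum>(x,y)\<in>PP. A y x)" by (rule sum_swap_PP)
    also have "\<dots> = - rhoY k t" unfolding rhoY_def ES_def A_def case_prod_beta
      by (simp add: sum_negf[symmetric]) (intro sum.cong refl, auto simp: mu_sym algebra_simps)
    finally show ?thesis .
  qed
  moreover have "(\<Sum>(x,y)\<in>PP. B x y) \<le> 0"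
    unfolding B_def using mu_nn by (intro sum_nonpos) (auto simp: mult_nonneg_nonpos)
  moreover have "(\<Sum>(x,y)\<in>PP. C x y) = Phi j t" unfolding Phi_def ES_as_sum C_def by (intro sum.cong) auto
  ultimately show ?thesis by linarith
qed

lemma Phi_le_rhoY: "Phi k t \<le> rhoY k t"
  unfolding Phi_def rhoY_def using mu_nn by (intro ES_mono) (auto intro: mult_nonneg_nonneg)

lemma rhoX_le_Phi: "rhoX k t \<le> Phi k t"
  unfolding Phi_def rhoX_def using mu_nn by (intro ES_mono) (auto simp: mult_nonneg_nonpos)

lemma ES_CS:
  assumes w: "\<And>x y. w x y \<ge> 0"
  shows "(ES j (\<lambda>x y. w x y * h x y))^2 \<le> ES j w * ES j (\<lambda>x y. w x y * (h x y)^2)"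
proof -
  let ?S = "{p\<in>PP. d (fst p) = j \<and> d (snd p) = Suc j}"
  have "(ES j (\<lambda>x y. w x y * h x y))^2 = (\<Sum>p\<in>?S. sqrt (w (fst p) (snd p)) * (sqrt (w (fst p) (snd p)) * h (fst p) (snd p)))^2"
    unfolding ES_eq_set case_prod_beta by (simp add: w mult.assoc[symmetric] real_sqrt_mult[symmetric])
  also have "\<dots> \<le> (\<Sum>p\<in>?S. (sqrt (w (fst p) (snd p)))^2) * (\<Sum>p\<in>?S. (sqrt (w (fst p) (snd p)) * h (fst p) (snd p))^2)"
    by (rule Cauchy_Schwarz_ineq_sum)
  also have "\<dots> = ES j w * ES j (\<lambda>x y. w x y * (h x y)^2)"
    unfolding ES_eq_set case_prod_beta by (simp add: w power_mult_distrib)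
  finally show ?thesis .
qed

lemma energy_below:
  assumes t: "t \<ge> 0" and J: "J \<subseteq> {..R}"
  shows "(\<Sum>j\<in>J. ES j (\<lambda>x y. if g x \<le> t \<and> g y \<le> t then mu x y * (g x - g y)^2 else 0)) \<le> t"
proof -
  let ?F = "\<lambda>s. min s t"
  let ?H = "\<lambda>x y. mu x y * (?F (g x) - ?F (g y)) * (g x - g y)"
  have F: "mono_on {0..} ?F" "?F 0 = 0" using t by (auto intro!: mono_onI)
  have H: "?H x y \<ge> 0" for x y by (rule mono_term[OF F(1)])
  have Hs: "?H y x = ?H x y" for x y by (simp add: mu_sym algebra_simps)
  have e1: "2 * min (g v0) t = (\<Sum>(x,y)\<in>PP. ?H x y)" using total[of ?F, OF F(2)] by simp
  have e2: "(\<Sum>(x,y)\<in>PP. ?H x y) = (\<Sum>(x,y)\<in>PP. if d x = d y then ?H x y else 0) + (\<Sum>j\<le>R. ES j ?H + ES j (\<lambda>x y. ?H y x))"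
    by (rule level_split)
  have e3: "(\<Sum>(x,y)\<in>PP. if d x = d y then ?H x y else 0) \<ge> 0"
    using H by (intro sum_nonneg) auto
  have e4: "(\<Sum>j\<le>R. ES j ?H + ES j (\<lambda>x y. ?H y x)) = 2 * (\<Sum>j\<le>R. ES j ?H)"
    unfolding Hs by (simp add: sum_distrib_left)
  have e5: "(\<Sum>j\<le>R. ES j ?H) \<ge> (\<Sum>j\<in>J. ES j ?H)"
    using J H by (intro sum_mono2) (auto intro: ES_nonneg)
  have e6: "(\<Sum>j\<in>J. ES j ?H) \<ge> (\<Sum>j\<in>J. ES j (\<lambda>x y. if g x \<le> t \<and> g y \<le> t then mu x y * (g x - g y)^2 else 0))"
    using H by (intro sum_mono ES_mono) (auto simp: power2_eq_square mult.assoc)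
  have "min (g v0) t \<le> t" by simp
  then show ?thesis using e1 e2 e3 e4 e5 e6 by linarith
qed

lemma level_from_Phi:
  assumes t: "t \<ge> 0" and J: "J \<subseteq> {..R}" and rho: "\<And>j. j \<in> J \<Longrightarrow> \<rho> \<le> Phi j t"
    and fJ: "(\<Sum>j\<in>J. 1 / bcond mu v0 j) > 0"
  shows "\<rho> \<le> sqrt (t / (\<Sum>j\<in>J. 1 / bcond mu v0 j))"
proof (cases "\<rho> \<le> 0")
  case True
  have "t / (\<Sum>j\<in>J. 1 / bcond mu v0 j) \<ge> 0" using t fJ by simp
  then have "sqrt (t / (\<Sum>j\<in>J. 1 / bcond mu v0 j)) \<ge> 0" by simp
  then show ?thesis using True by linarith
next
  case False
  let ?e = "\<lambda>j. ES j (\<lambda>x y. if g x \<le> t \<and> g y \<le> t then mu x y * (g x - g y)^2 else 0)"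
  have each: "\<rho>^2 * (1 / bcond mu v0 j) \<le> ?e j" if j: "j \<in> J" for j
  proof -
    have jR: "j \<le> R" using J j by auto
    let ?w = "\<lambda>x y. if g x \<le> t \<and> g y \<le> t then mu x y else 0"
    have w: "?w x y \<ge> 0" for x y using mu_nn by auto
    have wb: "ES j ?w \<le> bcond mu v0 j" unfolding bcond_ES[OF jR] using mu_nn by (intro ES_mono) auto
    have "Phi j t = ES j (\<lambda>x y. ?w x y * (g x - g y))" unfolding Phi_def by (intro ES_cong) auto
    then have "(Phi j t)^2 \<le> ES j ?w * ES j (\<lambda>x y. ?w x y * (g x - g y)^2)"
      using ES_CS[of ?w j "\<lambda>x y. g x - g y"] w by simp
    also have "ES j (\<lambda>x y. ?w x y * (g x - g y)^2) = ?e j" by (intro ES_cong) auto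
    finally have ph: "(Phi j t)^2 \<le> ES j ?w * ?e j" .
    have e0: "?e j \<ge> 0" using mu_nn by (intro ES_nonneg) auto
    have "ES j ?w * ?e j \<le> bcond mu v0 j * ?e j" using wb e0 by (rule mult_right_mono)
    then have "(Phi j t)^2 \<le> bcond mu v0 j * ?e j" using ph by linarith
    moreover have "\<rho>^2 \<le> (Phi j t)^2" using rho[OF j] False by (intro power_mono) auto
    ultimately have "\<rho>^2 \<le> bcond mu v0 j * ?e j" by linarith
    then show ?thesis using bcond_pos[OF jR] by (simp add: field_simps)
  qed
  have "\<rho>^2 * (\<Sum>j\<in>J. 1 / bcond mu v0 j) \<le> (\<Sum>j\<in>J. ?e j)"
    unfolding sum_distrib_left using each by (intro sum_mono) auto
  also have "\<dots> \<le> t" by (rule energy_below[OF t J])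
  finally have "\<rho>^2 \<le> t / (\<Sum>j\<in>J. 1 / bcond mu v0 j)" using fJ by (simp add: field_simps)
  then show ?thesis by (rule real_le_rsqrt)
qed

lemma f_pos: "n \<le> R \<Longrightarrow> f n > 0"
  unfolding f_def using bcond_pos by (intro sum_pos) auto

lemma rhoY_level: assumes "k < R" "t \<ge> 0" shows "rhoY k t \<le> sqrt (t / f (Suc k))"
  unfolding f_def
  by (rule level_from_Phi[OF assms(2)]) (use assms Q_arg f_pos[of "Suc k"] in \<open>auto simp: f_def\<close>)

lemma rhoX_level: assumes "n \<le> R" "t \<ge> 0" shows "rhoX n t \<le> sqrt (t / f n)"
  unfolding f_def
proof (rule level_from_Phi[OF assms(2)])
  show "rhoX n t \<le> Phi j t" if "j \<in> {n..R}" for j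
  proof (cases "j = n")
    case True then show ?thesis using rhoX_le_Phi by simp
  next
    case False
    then have "n < j" "j \<le> R" using that by auto
    then show ?thesis using rhoX_le_Phi[of n t] Phi_le_rhoY[of n t] Q_arg[of n j t] by linarith
  qed
qed (use assms f_pos[of n] in \<open>auto simp: f_def\<close>)

end

context wgR
begin

definition wY where "wY k p = (if d (fst p) = k \<and> d (snd p) = Suc k then mu (fst p) (snd p) * (g (fst p) - g (snd p)) else 0)"

lemma Ys_sum: "Ys k F = (\<Sum>p\<in>PP. wY k p * F (g (snd p)))"
  unfolding Ys_def ES_def wY_def by (intro sum.cong) auto

lemma Xs_sum: "Xs k F = (\<Sum>p\<in>PP. wY k p * F (g (fst p)))"
  unfolding Xs_def ES_def wY_def by (intro sum.cong) auto

lemma wY_tot: "k \<le> R \<Longrightarrow> (\<Sum>p\<in>PP. wY k p) = 1"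
  using flux[of k] unfolding ES_def wY_def by simp

lemma src_Y: assumes "k < R" shows "src_lv PP (wY k) (\<lambda>p. g (snd p)) (g v0) (f (Suc k))"
proof (unfold_locales)
  show "finite PP" by (rule finPP)
  show "g (snd i) \<ge> 0" for i by (rule g_nn)
  show "g v0 \<ge> 0" by (rule g_nn)
  show "0 \<le> (\<Sum>i\<in>PP. wY k i * F (g (snd i))) \<and> (\<Sum>i\<in>PP. wY k i * F (g (snd i))) \<le> F (g v0)"
    if "mono_on {0..} F" "F 0 = 0" for F
    using Y_bounds[OF that, of k] unfolding Ys_sum by simp
  show "(\<Sum>i\<in>PP. wY k i) = 1" using wY_tot assms by simp
  show "(\<Sum>i\<in>PP. wY k i * g (snd i)) \<ge> f (Suc k)" using Y_energy[of k] assms unfolding Ys_sum by simp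
  show "f (Suc k) > 0" using f_pos[of "Suc k"] assms by simp
  show "(\<Sum>i\<in>{i\<in>PP. g (snd i) \<le> t}. wY k i) \<le> sqrt (t / f (Suc k))" if "t \<ge> 0" for t
  proof -
    have "(\<Sum>i\<in>{i\<in>PP. g (snd i) \<le> t}. wY k i) = rhoY k t"
      unfolding rhoY_def ES_def wY_def using finPP by (simp add: sum.inter_filter[symmetric]) (intro sum.cong, auto)
    then show ?thesis using rhoY_level[OF assms that] by simp
  qed
qed

lemma src_X: assumes "n \<le> R" shows "src_lv PP (wY n) (\<lambda>p. g (fst p)) (g v0) (f n)"
proof (unfold_locales)
  show "finite PP" by (rule finPP)
  show "g (fst i) \<ge> 0" for i by (rule g_nn)
  show "g v0 \<ge> 0" by (rule g_nn)
  show "0 \<le> (\<Sum>i\<in>PP. wY n i * F (g (fst i))) \<and> (\<Sum>i\<in>PP. wY n i * F (g (fst i))) \<le> F (g v0)"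
    if "mono_on {0..} F" "F 0 = 0" for F
    using X_bounds[OF that, of n] unfolding Xs_sum by simp
  show "(\<Sum>i\<in>PP. wY n i) = 1" using wY_tot assms by simp
  show "(\<Sum>i\<in>PP. wY n i * g (fst i)) \<ge> f n" using X_energy[of n] assms unfolding Xs_sum by simp
  show "f n > 0" using f_pos[of n] assms by simp
  show "(\<Sum>i\<in>{i\<in>PP. g (fst i) \<le> t}. wY n i) \<le> sqrt (t / f n)" if "t \<ge> 0" for t
  proof -
    have "(\<Sum>i\<in>{i\<in>PP. g (fst i) \<le> t}. wY n i) = rhoX n t"
      unfolding rhoX_def ES_def wY_def using finPP by (simp add: sum.inter_filter[symmetric]) (intro sum.cong, auto)
    then show ?thesis using rhoX_level[OF assms that] by simp
  qed
qed

lemma Y_T1_convex: assumes "k < R" "p \<ge> 1" shows "Ys k (\<lambda>s. s powr p) \<ge> f (Suc k) powr p"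
proof -
  interpret src_lv PP "wY k" "\<lambda>p. g (snd p)" "g v0" "f (Suc k)" by (rule src_Y[OF assms(1)])
  show ?thesis using convex_T1[OF assms(2)] unfolding S_def Ys_sum by simp
qed

lemma Y_T1_concave: assumes "k < R" "p > 0" shows "Ys k (\<lambda>s. s powr p) \<ge> f (Suc k) powr p / (2*p+1)"
proof -
  interpret src_lv PP "wY k" "\<lambda>p. g (snd p)" "g v0" "f (Suc k)" by (rule src_Y[OF assms(1)])
  show ?thesis using concave_T1[OF assms(2)] unfolding S_def Ys_sum by simp
qed

lemma X_T1_convex: assumes "n \<le> R" "p \<ge> 1" shows "Xs n (\<lambda>s. s powr p) \<ge> f n powr p"
proof -
  interpret src_lv PP "wY n" "\<lambda>p. g (fst p)" "g v0" "f n" by (rule src_X[OF assms(1)])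
  show ?thesis using convex_T1[OF assms(2)] unfolding S_def Xs_sum by simp
qed

lemma X_T1_concave: assumes "n \<le> R" "p > 0" shows "Xs n (\<lambda>s. s powr p) \<ge> f n powr p / (2*p+1)"
proof -
  interpret src_lv PP "wY n" "\<lambda>p. g (fst p)" "g v0" "f n" by (rule src_X[OF assms(1)])
  show ?thesis using concave_T1[OF assms(2)] unfolding S_def Xs_sum by simp
qed

end

lemma chi_ge1:
  fixes p t :: real
  assumes p: "0 < p" "p \<le> 1" and t: "0 < t" "t \<le> 1"
  shows "1 \<le> p * t powr (p - 1) + (1 - p) * t powr p"
proof -
  define chi where "chi x = - (p * x powr (p - 1) + (1 - p) * x powr p)" for x :: real
  have "chi t \<le> chi 1"
  proof (rule DERIV_nonneg_imp_increasing_open[OF t(2)])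
    fix x assume x: "t < x" "x < 1"
    then have x0: "x > 0" using t by simp
    have D: "(chi has_real_derivative - (p * ((p - 1) * x powr (p - 1 - 1)) + (1 - p) * (p * x powr (p - 1)))) (at x)"
      unfolding chi_def by (intro DERIV_minus DERIV_add DERIV_cmult has_real_derivative_powr[OF x0])
    have e: "x powr (p - 1) = x * x powr (p - 1 - 1)" using x0 by (simp add: powr_mult_base)
    have "0 \<le> p * (1 - p) * x powr (p - 1 - 1) * (1 - x)" using p x by (intro mult_nonneg_nonneg) auto
    then have "0 \<le> - (p * ((p - 1) * x powr (p - 1 - 1)) + (1 - p) * (p * x powr (p - 1)))"
      unfolding e by (simp add: algebra_simps)
    then show "\<exists>y. (chi has_real_derivative y) (at x) \<and> 0 \<le> y" using D by blast
  next
    show "continuous_on {t..1} chi" unfolding chi_def using t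
      by (intro continuous_intros continuous_on_powr) auto
  qed
  then show ?thesis unfolding chi_def by simp
qed

lemma phi_nonneg:
  fixes p s :: real
  assumes p: "0 < p" "p \<le> 1" and s: "0 \<le> s" "s \<le> 1"
  shows "p * (1 - s) * (1 + s powr p) \<le> (1 + s) * (1 - s powr p)"
proof -
  define phi where "phi x = p * (1 - x) * (1 + x powr p) - (1 + x) * (1 - x powr p)" for x :: real
  have "phi s \<le> phi 1"
  proof (rule DERIV_nonneg_imp_increasing_open[OF s(2)])
    fix x assume x: "s < x" "x < 1"
    then have x0: "x > 0" using s by simp
    have D: "(phi has_real_derivative
        (p * (0 - 1) * (1 + x powr p) + p * (1 - x) * (0 + p * x powr (p - 1))
         - ((0 + 1) * (1 - x powr p) + (1 + x) * (0 - p * x powr (p - 1))))) (at x)"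
    proof -
      have A2: "((\<lambda>x. p * (1 - x)) has_real_derivative p * (0 - 1)) (at x)"
        by (intro DERIV_cmult DERIV_diff DERIV_const DERIV_ident)
      have A3: "((\<lambda>x. 1 + x powr p) has_real_derivative 0 + p * x powr (p - 1)) (at x)"
        by (intro DERIV_add DERIV_const has_real_derivative_powr[OF x0])
      have B1: "((\<lambda>x. 1 + x) has_real_derivative 0 + 1) (at x)"
        by (intro DERIV_add DERIV_const DERIV_ident)
      have B2: "((\<lambda>x. 1 - x powr p) has_real_derivative 0 - p * x powr (p - 1)) (at x)"
        by (intro DERIV_diff DERIV_const has_real_derivative_powr[OF x0])
      show ?thesis unfolding phi_def
        by (rule DERIV_cong[OF DERIV_diff[OF DERIV_mult[OF A2 A3] DERIV_mult[OF B1 B2]]]) (simp add: algebra_simps)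
    qed
    have e: "x powr p = x * x powr (p - 1)" using x0 by (simp add: powr_mult_base)
    have "1 \<le> p * x powr (p - 1) + (1 - p) * x powr p" using chi_ge1[OF p x0] x by simp
    then have "0 \<le> (1 + p) * (p * x powr (p - 1) + (1 - p) * x powr p - 1)" using p by simp
    then have "0 \<le> p * (0 - 1) * (1 + x powr p) + p * (1 - x) * (0 + p * x powr (p - 1))
         - ((0 + 1) * (1 - x powr p) + (1 + x) * (0 - p * x powr (p - 1)))"
      unfolding e by (simp add: algebra_simps)
    then show "\<exists>y. (phi has_real_derivative y) (at x) \<and> 0 \<le> y" using D by blast
  next
    show "continuous_on {s..1} phi" unfolding phi_def using s p
      by (intro continuous_intros continuous_on_powr') auto
  qed
  then show ?thesis unfolding phi_def by simp
qed

lemma tanh_ineq: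
  fixes p a b :: real
  assumes p: "0 < p" "p \<le> 1" and ab: "0 \<le> b" "b \<le> a"
  shows "p * (a - b) * (a powr p + b powr p) \<le> (a + b) * (a powr p - b powr p)"
proof (cases "a = 0")
  case True then show ?thesis using ab by simp
next
  case False
  then have a0: "a > 0" using ab by simp
  define s where "s = b / a"
  have s: "0 \<le> s" "s \<le> 1" using ab a0 unfolding s_def by auto
  have b: "b = s * a" unfolding s_def using a0 by simp
  have bp: "b powr p = s powr p * a powr p" unfolding b using s a0 by (simp add: powr_mult)
  have "p * (1 - s) * (1 + s powr p) * (a * a powr p) \<le> (1 + s) * (1 - s powr p) * (a * a powr p)"
    using phi_nonneg[OF p s] a0 by (intro mult_right_mono) auto
  then show ?thesis unfolding bp unfolding b by (simp add: algebra_simps)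
qed

lemma first_order:
  fixes p a b :: real
  assumes p: "0 < p" and ab: "0 \<le> b" "b \<le> a"
  shows "b powr p * (a - b) \<le> a * a powr p / (2 * p)"
proof (cases "b = 0")
  case True then show ?thesis using ab p by simp
next
  case False
  then have b0: "b > 0" using ab by simp
  then have a0: "a > 0" using ab by simp
  define s where "s = b / a"
  have s: "0 < s" "s \<le> 1" using ab a0 b0 unfolding s_def by auto
  have b: "b = s * a" unfolding s_def using a0 by simp
  have bp: "b powr p = s powr p * a powr p" unfolding b using s a0 by (simp add: powr_mult)
  have sp: "s powr p \<le> exp (- p * (1 - s))"
  proof -
    have "s powr p = exp (p * ln s)" using s by (simp add: powr_def)
    also have "\<dots> \<le> exp (- p * (1 - s))"
    proof -
      have "p * ln s \<le> p * (s - 1)" using ln_le_minus_one[OF s(1)] p by (intro mult_left_mono) auto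
      then show ?thesis by (simp add: algebra_simps)
    qed
    finally show ?thesis .
  qed
  define x where "x = p * (1 - s)"
  have x0: "x \<ge> 0" unfolding x_def using p s by simp
  have "x \<le> exp (x - 1)" using exp_ge_add_one_self[of "x - 1"] by simp
  also have "exp (x - 1) = exp x / exp 1" by (simp add: exp_diff)
  finally have "x * exp (- x) \<le> 1 / exp 1" by (simp add: exp_minus field_simps)
  also have "1 / exp 1 \<le> (1/2 :: real)" using exp_ge_add_one_self[of 1] by simp
  finally have xe: "x * exp (- x) \<le> 1/2" .
  have "s powr p * (1 - s) \<le> exp (- x) * (1 - s)" using sp s unfolding x_def by (intro mult_right_mono) (auto simp: algebra_simps)
  also have "\<dots> = (x * exp (- x)) / p" unfolding x_def using p by simp
  also have "\<dots> \<le> (1/2) / p" using xe p by (intro divide_right_mono) auto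
  also have "\<dots> = 1 / (2 * p)" by simp
  finally have "s powr p * (1 - s) \<le> 1 / (2 * p)" .
  then have "s powr p * (1 - s) * (a * a powr p) \<le> 1 / (2 * p) * (a * a powr p)"
    using a0 by (intro mult_right_mono) auto
  moreover have "b powr p * (a - b) = s powr p * (1 - s) * (a * a powr p)"
  proof -
    have "a - b = (1 - s) * a" using b by (simp add: algebra_simps)
    then show ?thesis unfolding bp by (simp add: algebra_simps)
  qed
  ultimately show ?thesis by simp
qed

lemma edge_A:
  fixes p a b \<alpha> :: real and j :: nat
  assumes p: "p > 0" and a: "a \<ge> 0" and b: "b \<ge> 0"
  assumes \<alpha>_def: "\<alpha> = (if p < 1 then 5/(6*p) else 16/(5*p))"
  defines "m \<equiv> real j + 1"
  defines "D \<equiv> m + 1/2" and "P \<equiv> m^2 + m + 1/2"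
  shows "D * ((a - b) * (a powr p + b powr p)) \<le> \<alpha> * (a * a powr p + b * b powr p) + 3/5 * P * ((a powr p - b powr p) * (a - b))"
proof -
  define Ga where "Ga = a powr p"
  define Gb where "Gb = b powr p"
  define W where "W = a * Ga + b * Gb"
  define Y where "Y = (Ga - Gb) * (a - b)"
  define Z where "Z = (a - b) * (Ga + Gb)"
  have Ga0: "Ga \<ge> 0" "Gb \<ge> 0" unfolding Ga_def Gb_def by auto
  have W0: "W \<ge> 0" unfolding W_def using a b Ga0 by auto
  have Y0: "Y \<ge> 0"
  proof (cases "a \<le> b")
    case True then have "Ga \<le> Gb" unfolding Ga_def Gb_def using a p by (intro powr_mono2) auto
    then show ?thesis unfolding Y_def using True by (simp add: mult_nonpos_nonpos)
  next
    case False then have "Gb \<le> Ga" unfolding Ga_def Gb_def using b p by (intro powr_mono2) auto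
    then show ?thesis unfolding Y_def using False by simp
  qed
  have m1: "m \<ge> 1" unfolding m_def by simp
  have D0: "D > 0" unfolding D_def using m1 by simp
  have al0: "\<alpha> > 0" unfolding \<alpha>_def using p by simp
  have DP: "D^2 \<le> P" unfolding D_def P_def by (simp add: power2_eq_square algebra_simps)
  have goal: "D * Z \<le> \<alpha> * W + 3/5 * P * Y"
  proof (cases "a \<le> b")
    case True
    then have "Z \<le> 0" unfolding Z_def using Ga0 by (simp add: mult_nonpos_nonneg)
    then have "D * Z \<le> 0" using D0 by (simp add: mult_nonneg_nonpos)
    moreover have "0 \<le> \<alpha> * W + 3/5 * P * Y" using al0 W0 Y0 unfolding P_def using m1
      by (intro add_nonneg_nonneg mult_nonneg_nonneg) auto
    ultimately show ?thesis by linarith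
  next
    case False
    then have ab: "b < a" by simp
    then have a0: "a > 0" using b by simp
    have Wpos: "W > 0" unfolding W_def Ga_def using a0 b Ga0(2) Gb_def by (simp add: add_pos_nonneg)
    show ?thesis
    proof (cases "p < 1")
      case True
      have al: "\<alpha> = 5/(6*p)" unfolding \<alpha>_def using True by simp
      have cheb: "(Ga + Gb) * (a + b) \<le> 2 * W"
      proof -
        have "(Ga - Gb) * (a - b) \<ge> 0" using Y0 unfolding Y_def .
        then show ?thesis unfolding W_def by (simp add: algebra_simps)
      qed
      have th: "p * (a - b) * (Ga + Gb) \<le> (a + b) * (Ga - Gb)"
        unfolding Ga_def Gb_def using tanh_ineq[of p b a] True p b ab by simp
      have "p * Z * (Ga + Gb) = (p * (a - b) * (Ga + Gb)) * (Ga + Gb)" unfolding Z_def by (simp add: algebra_simps)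
      also have "\<dots> \<le> ((a + b) * (Ga - Gb)) * (Ga + Gb)" using th Ga0 by (intro mult_right_mono) auto
      finally have "p * Z * (Ga + Gb) \<le> (a + b) * (Ga - Gb) * (Ga + Gb)" .
      also have "\<dots> = ((Ga + Gb) * (a + b)) * (Ga - Gb)" by (simp add: algebra_simps)
      also have "\<dots> \<le> 2 * W * (Ga - Gb)"
      proof -
        have "Gb \<le> Ga" unfolding Ga_def Gb_def using b p ab by (intro powr_mono2) auto
        then show ?thesis using cheb by (intro mult_right_mono) auto
      qed
      finally have pz: "p * Z * (Ga + Gb) \<le> 2 * W * (Ga - Gb)" .
      have Z2: "p * Z^2 \<le> 2 * W * Y"
      proof -
        have "p * Z^2 = (p * Z * (Ga + Gb)) * (a - b)" unfolding Z_def by (simp add: power2_eq_square algebra_simps)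
        also have "\<dots> \<le> (2 * W * (Ga - Gb)) * (a - b)" using pz ab by (intro mult_right_mono) auto
        also have "\<dots> = 2 * W * Y" unfolding Y_def by (simp add: algebra_simps)
        finally show ?thesis .
      qed
      have amgm: "D * Z \<le> \<alpha> * W + D^2 * Z^2 / (4 * \<alpha> * W)"
      proof -
        have "0 \<le> (2 * \<alpha> * W - D * Z)^2 / (4 * \<alpha> * W)" using al0 Wpos by simp
        also have "(2 * \<alpha> * W - D * Z)^2 / (4 * \<alpha> * W) = \<alpha> * W + D^2 * Z^2 / (4 * \<alpha> * W) - D * Z"
          using al0 Wpos by (simp add: power2_eq_square field_simps)
        finally show ?thesis by simp
      qed
      have "D^2 * Z^2 / (4 * \<alpha> * W) \<le> D^2 * (2 * W * Y / p) / (4 * \<alpha> * W)"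
      proof -
        have "Z^2 \<le> 2 * W * Y / p" using Z2 p by (simp add: field_simps mult.commute)
        then show ?thesis using al0 Wpos by (intro divide_right_mono mult_left_mono) auto
      qed
      also have "\<dots> = 3/5 * D^2 * Y" unfolding al using p Wpos by (simp add: field_simps)
      also have "\<dots> \<le> 3/5 * P * Y"
      proof -
        have "D^2 * Y \<le> P * Y" by (rule mult_right_mono[OF DP Y0])
        then show ?thesis by (simp add: mult.commute)
      qed
      finally show ?thesis using amgm by linarith
    next
      case False
      then have p1: "p \<ge> 1" by simp
      have al: "\<alpha> = 16/(5*p)" unfolding \<alpha>_def using False by simp
      have Zs: "Z = Y + 2 * Gb * (a - b)" unfolding Z_def Y_def by (simp add: algebra_simps)
      have kap: "3/5 * P - D \<ge> 0"
      proof -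
        have "(3*m+1)*(m-1) \<ge> 0" using m1 by simp
        then show ?thesis unfolding P_def D_def by (simp add: power2_eq_square algebra_simps)
      qed
      have rest: "2 * D * Gb * (a - b) \<le> \<alpha> * W + (3/5 * P - D) * Y"
      proof (cases "j \<le> 1")
        case True
        then have Dle: "D \<le> 5/2" unfolding D_def m_def by (cases j) auto
        have fo: "Gb * (a - b) \<le> a * Ga / (2 * p)" unfolding Ga_def Gb_def using first_order[of p b a] p b ab by simp
        have "2 * D * (Gb * (a - b)) \<le> 2 * D * (a * Ga / (2 * p))" using fo D0 by (intro mult_left_mono) auto
        then have "2 * D * Gb * (a - b) \<le> 2 * D * (a * Ga / (2 * p))" by (simp add: mult.assoc)
        also have "\<dots> = D / p * (a * Ga)" using p by simp
        also have "\<dots> \<le> \<alpha> * (a * Ga)"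
        proof -
          have "D / p \<le> (16/5) / p" using Dle p by (intro divide_right_mono) auto
          then have "D / p \<le> \<alpha>" unfolding al by simp
          then show ?thesis using a Ga0 by (intro mult_right_mono) auto
        qed
        also have "\<dots> \<le> \<alpha> * W" unfolding W_def using al0 b Ga0 by simp
        finally show ?thesis using kap Y0 by (smt (verit) mult_nonneg_nonneg)
      next
        case False
        then have m3: "m \<ge> 3" unfolding m_def by simp
        show ?thesis
        proof (cases "b = 0")
          case True
          then show ?thesis unfolding Gb_def using kap Y0 al0 W0 by simp
        next
          case False
          then have b0: "b > 0" using b by simp
          have sec: "p * b powr (p - 1) * (a - b) \<le> Ga - Gb"
            using convex_K1[OF p1 b0 order_refl, of a] ab unfolding Ga_def Gb_def by (simp add: mult.commute)
          have Gbb: "Gb = b * b powr (p - 1)" unfolding Gb_def using b0 by (simp add: powr_mult_base)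
          have "2 * D * Gb * (a - b) \<le> \<alpha> * (b * Gb) + D^2 * (b powr (p - 1) * (a - b)^2) / \<alpha>"
          proof -
            have "0 \<le> b powr (p - 1) * (\<alpha> * b - D * (a - b))^2 / \<alpha>" using al0 by simp
            also have "b powr (p - 1) * (\<alpha> * b - D * (a - b))^2 / \<alpha>
                = \<alpha> * (b * Gb) + D^2 * (b powr (p - 1) * (a - b)^2) / \<alpha> - 2 * D * Gb * (a - b)"
              unfolding Gbb using al0 by (simp add: power2_eq_square field_simps)
            finally show ?thesis by simp
          qed
          also have "D^2 * (b powr (p - 1) * (a - b)^2) / \<alpha> \<le> D^2 * (Y / p) / \<alpha>"
          proof -
            have "p * (b powr (p - 1) * (a - b)^2) \<le> (Ga - Gb) * (a - b)"
              using sec ab by (simp add: power2_eq_square mult_right_mono mult.assoc[symmetric])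
            then have "b powr (p - 1) * (a - b)^2 \<le> Y / p" unfolding Y_def using p by (simp add: field_simps)
            then show ?thesis using al0 by (intro divide_right_mono mult_left_mono) auto
          qed
          also have "D^2 * (Y / p) / \<alpha> = 5/16 * D^2 * Y" unfolding al using p by (simp add: field_simps)
          also have "5/16 * D^2 * Y \<le> (3/5 * P - D) * Y"
          proof -
            have "(m - 3) * (23 * m + 12) \<ge> 0" using m3 by simp
            then have h: "23 * m^2 - 57 * m - 36 \<ge> 0" by (simp add: power2_eq_square algebra_simps)
            have e1: "5/16 * D^2 = 5/16 * m^2 + 5/16 * m + 5/64" unfolding D_def by (simp add: power2_eq_square algebra_simps)
            have e2: "3/5 * P - D = 3/5 * m^2 - 2/5 * m - 1/5" unfolding D_def P_def by (simp add: algebra_simps)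
            have "5/16 * D^2 \<le> 3/5 * P - D" unfolding e1 e2 using h by linarith
            then show ?thesis using Y0 by (intro mult_right_mono) auto
          qed
          also have "\<alpha> * (b * Gb) \<le> \<alpha> * W" unfolding W_def using al0 a Ga0 by simp
          finally show ?thesis by linarith
        qed
      qed
      show ?thesis unfolding Zs using rest by (simp add: algebra_simps)
    qed
  qed
  then show ?thesis unfolding Z_def Y_def W_def Ga_def Gb_def by (simp add: mult.commute)
qed

lemma edge_final:
  fixes p a b \<alpha> :: real and j :: nat
  assumes p: "p > 0" and a: "a \<ge> 0" and b: "b \<ge> 0"
  assumes \<alpha>_def: "\<alpha> = (if p < 1 then 5/(6*p) else 16/(5*p))"
  shows "2/5 * (real j + 3/2) * ((a - b) * (a powr p + b powr p))
     \<le> \<alpha> * (a * a powr p + b * b powr p) + 3/5 * (((real j + 1)^2 * a powr p - (real j + 2)^2 * b powr p) * (a - b))"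
proof -
  define M where "M = real j + 3/2"
  define Z where "Z = (a - b) * (a powr p + b powr p)"
  define W where "W = a * a powr p + b * b powr p"
  define L where "L = ((real j + 1)^2 * a powr p - (real j + 2)^2 * b powr p) * (a - b)"
  define Q where "Q = ((real j + 1)^2 + (real j + 1) + 1/2) * ((a powr p - b powr p) * (a - b))"
  have A0: "(real j + 1 + 1/2) * Z \<le> \<alpha> * W + 3/5 * ((real j + 1)^2 + (real j + 1) + 1/2) * ((a powr p - b powr p) * (a - b))"
    unfolding Z_def W_def by (rule edge_A[OF p a b \<alpha>_def])
  have e1: "real j + 1 + 1/2 = M" unfolding M_def by simp
  have e2: "3/5 * ((real j + 1)^2 + (real j + 1) + 1/2) * ((a powr p - b powr p) * (a - b)) = 3/5 * Q"
    unfolding Q_def by (simp only: mult.assoc)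
  have A: "M * Z \<le> \<alpha> * W + 3/5 * Q" using A0 unfolding e1 e2 .
  have e: "Q = L + M * Z" unfolding Q_def L_def M_def Z_def by (simp add: power2_eq_square algebra_simps)
  have "M * Z \<le> \<alpha> * W + 3/5 * L + 3/5 * (M * Z)" using A unfolding e by (simp add: distrib_left)
  then have fin: "2/5 * (M * Z) \<le> \<alpha> * W + 3/5 * L" by linarith
  have l: "2/5 * (real j + 3/2) * ((a - b) * (a powr p + b powr p)) = 2/5 * (M * Z)" unfolding M_def Z_def by simp
  show ?thesis unfolding l using fin unfolding W_def L_def .
qed

context wgR
begin

lemma L_lower:
  fixes p :: real assumes p: "p > 0"
  shows "(\<Sum>j\<le>R. ES j (\<lambda>x y. mu x y * (g x * g x powr p + g y * g y powr p)))
        \<le> (\<Sum>x\<in>BB. g x powr (1 + p) * m x)"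
proof -
  define K where "K x y = mu x y * (g x * g x powr p)" for x y
  have K0: "K x y \<ge> 0" for x y unfolding K_def using mu_nn g_nn by simp
  have split: "ES j (\<lambda>x y. mu x y * (g x * g x powr p + g y * g y powr p)) = ES j K + ES j (\<lambda>x y. K y x)" for j
    unfolding ES_add[symmetric] K_def by (intro ES_cong) (simp add: mu_sym algebra_simps)
  have "(\<Sum>j\<le>R. ES j K + ES j (\<lambda>x y. K y x)) \<le> (\<Sum>(x,y)\<in>PP. K x y)"
  proof -
    have "(\<Sum>(x,y)\<in>PP. K x y) = (\<Sum>(x,y)\<in>PP. if d x = d y then K x y else 0) + (\<Sum>j\<le>R. ES j K + ES j (\<lambda>x y. K y x))"
      by (rule level_split)
    moreover have "(\<Sum>(x,y)\<in>PP. if d x = d y then K x y else 0) \<ge> 0" using K0 by (intro sum_nonneg) auto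
    ultimately show ?thesis by linarith
  qed
  also have "(\<Sum>(x,y)\<in>PP. K x y) = (\<Sum>x\<in>VV. \<Sum>y\<in>{y\<in>VV. adj mu x y}. K x y)"
    unfolding PP_def by (subst sum.Sigma) (use finVV in auto)
  also have "\<dots> = (\<Sum>x\<in>BB. \<Sum>y\<in>{y\<in>VV. adj mu x y}. K x y)"
    using finVV BB_VV by (intro sum.mono_neutral_right) (auto simp: K_def g_out)
  also have "\<dots> = (\<Sum>x\<in>BB. g x powr (1 + p) * m x)"
  proof (intro sum.cong refl)
    fix x assume x: "x \<in> BB"
    have "{y\<in>VV. adj mu x y} = N x" using N_VV[OF x] by auto
    then have "(\<Sum>y\<in>{y\<in>VV. adj mu x y}. K x y) = (g x * g x powr p) * m x"
      unfolding K_def vmeas_def by (simp add: sum_distrib_right[symmetric] mult.commute)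
    also have "g x * g x powr p = g x powr (1 + p)" using g_nn by (simp add: powr_mult_base)
    finally show "(\<Sum>y\<in>{y\<in>VV. adj mu x y}. K x y) = g x powr (1 + p) * m x" .
  qed
  finally show ?thesis unfolding split .
qed

definition uH where "uH p z = (real (d z) + 1)^2 * g z powr p"

lemma hardy_identity:
  fixes p :: real assumes p: "p > 0"
  shows "(\<Sum>j\<le>R. ES j (\<lambda>x y. mu x y * (((real j + 1)^2 * g x powr p - (real j + 2)^2 * g y powr p) * (g x - g y))))
        \<le> g v0 powr p"
proof -
  let ?H = "\<lambda>x y. mu x y * (uH p x - uH p y) * (g x - g y)"
  have Hs: "?H y x = ?H x y" for x y by (simp add: mu_sym algebra_simps)
  have tot: "(\<Sum>(x,y)\<in>PP. ?H x y) = 2 * uH p v0"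
    by (rule green_identity) (simp add: uH_def g_out)
  have u0: "uH p v0 = g v0 powr p" unfolding uH_def by simp
  have "(\<Sum>(x,y)\<in>PP. ?H x y) = (\<Sum>(x,y)\<in>PP. if d x = d y then ?H x y else 0) + (\<Sum>j\<le>R. ES j ?H + ES j (\<lambda>x y. ?H y x))"
    by (rule level_split)
  moreover have "(\<Sum>(x,y)\<in>PP. if d x = d y then ?H x y else 0) \<ge> 0"
  proof (intro sum_nonneg)
    fix pr assume "pr \<in> PP"
    obtain x y where pr: "pr = (x,y)" by (cases pr)
    have "mu x y * (uH p x - uH p y) * (g x - g y) \<ge> 0" if dd: "d x = d y"
    proof -
      have mono: "mono_on {0..} (\<lambda>s::real. (real (d x) + 1)^2 * s powr p)"
        using p by (intro mono_onI mult_left_mono powr_mono2) auto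
      have "mu x y * ((\<lambda>s. (real (d x) + 1)^2 * s powr p) (g x) - (\<lambda>s. (real (d x) + 1)^2 * s powr p) (g y)) * (g x - g y) \<ge> 0"
        by (rule mono_term[OF mono])
      then show ?thesis unfolding uH_def dd by simp
    qed
    then show "0 \<le> (case pr of (x, y) \<Rightarrow> if d x = d y then ?H x y else 0)" unfolding pr by auto
  qed
  moreover have "ES j (\<lambda>x y. ?H y x) = ES j ?H" for j unfolding Hs ..
  ultimately have "2 * (\<Sum>j\<le>R. ES j ?H) \<le> 2 * g v0 powr p"
    unfolding tot u0 by (simp add: sum.distrib sum_distrib_left[symmetric])
  moreover have "ES j ?H = ES j (\<lambda>x y. mu x y * (((real j + 1)^2 * g x powr p - (real j + 2)^2 * g y powr p) * (g x - g y)))" for j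
    unfolding uH_def by (intro ES_cong) (simp add: algebra_simps)
  ultimately show ?thesis by simp
qed

lemma Xs0: "Xs 0 G = G (g v0)"
proof -
  have "Xs 0 G = ES 0 (\<lambda>x y. G (g v0) * (mu x y * (g x - g y)))"
    unfolding Xs_def by (intro ES_cong) (auto simp: d0_iff)
  also have "\<dots> = G (g v0)" unfolding ES_cmult flux[of 0, simplified] by simp
  finally show ?thesis .
qed

end

context wgR
begin

theorem main_wgR:
  fixes q :: real
  assumes R1: "R \<ge> 1" and q: "q > 1"
  shows "(\<Sum>x\<in>BB. g x powr q * m x) \<ge> (q - 1) / 4 * (\<Sum>n=1..R. real n * f n powr (q - 1))"
proof -
  define p where "p = q - 1"
  have p: "p > 0" unfolding p_def using q by simp
  have qp: "q = 1 + p" unfolding p_def by simp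
  define \<alpha> where "\<alpha> = (if p < 1 then 5/(6*p) else 16/(5*p))"
  define c where "c = (if p < 1 then 1/(2*p+1) else 1)"
  have al0: "\<alpha> > 0" unfolding \<alpha>_def using p by simp
  have c0: "c > 0" unfolding c_def using p by simp
  define G where "G s = s powr p" for s :: real
  define L where "L = (\<Sum>x\<in>BB. g x powr q * m x)"
  define X where "X j = Xs j G" for j
  define Y where "Y j = Ys j G" for j
  define Hj where "Hj j = ES j (\<lambda>x y. mu x y * (((real j + 1)^2 * g x powr p - (real j + 2)^2 * g y powr p) * (g x - g y)))" for j
  define Wj where "Wj j = ES j (\<lambda>x y. mu x y * (g x * g x powr p + g y * g y powr p))" for j
  have Gmono: "mono_on {0..} G" "G 0 = 0" unfolding G_def using p by (auto intro!: mono_onI powr_mono2)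
  have A: "2/5 * (real j + 3/2) * (X j + Y j) \<le> \<alpha> * Wj j + 3/5 * Hj j" for j
  proof -
    have "ES j (\<lambda>x y. 2/5 * (real j + 3/2) * (mu x y * ((g x - g y) * (g x powr p + g y powr p))))
        \<le> ES j (\<lambda>x y. \<alpha> * (mu x y * (g x * g x powr p + g y * g y powr p))
               + 3/5 * (mu x y * (((real j + 1)^2 * g x powr p - (real j + 2)^2 * g y powr p) * (g x - g y))))"
    proof (rule ES_mono)
      fix x y
      have e: "2/5 * (real j + 3/2) * ((g x - g y) * (g x powr p + g y powr p))
          \<le> \<alpha> * (g x * g x powr p + g y * g y powr p) + 3/5 * (((real j + 1)^2 * g x powr p - (real j + 2)^2 * g y powr p) * (g x - g y))"
        by (rule edge_final[OF p g_nn g_nn \<alpha>_def])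
      have "mu x y * (2/5 * (real j + 3/2) * ((g x - g y) * (g x powr p + g y powr p)))
          \<le> mu x y * (\<alpha> * (g x * g x powr p + g y * g y powr p) + 3/5 * (((real j + 1)^2 * g x powr p - (real j + 2)^2 * g y powr p) * (g x - g y)))"
        using e mu_nn by (rule mult_left_mono)
      then show "2/5 * (real j + 3/2) * (mu x y * ((g x - g y) * (g x powr p + g y powr p)))
        \<le> \<alpha> * (mu x y * (g x * g x powr p + g y * g y powr p))
               + 3/5 * (mu x y * (((real j + 1)^2 * g x powr p - (real j + 2)^2 * g y powr p) * (g x - g y)))"
        by (simp add: algebra_simps)
    qed
    moreover have "ES j (\<lambda>x y. 2/5 * (real j + 3/2) * (mu x y * ((g x - g y) * (g x powr p + g y powr p))))
        = 2/5 * (real j + 3/2) * (X j + Y j)"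
      unfolding ES_cmult X_def Y_def Xs_def Ys_def G_def ES_add[symmetric] by (simp add: algebra_simps)
    moreover have "ES j (\<lambda>x y. \<alpha> * (mu x y * (g x * g x powr p + g y * g y powr p))
               + 3/5 * (mu x y * (((real j + 1)^2 * g x powr p - (real j + 2)^2 * g y powr p) * (g x - g y))))
        = \<alpha> * Wj j + 3/5 * Hj j"
      unfolding ES_add ES_cmult Wj_def Hj_def ..
    ultimately show ?thesis by simp
  qed
  have B: "2/5 * (\<Sum>j\<le>R. (real j + 3/2) * (X j + Y j)) \<le> \<alpha> * L + 3/5 * G (g v0)"
  proof -
    have "2/5 * (\<Sum>j\<le>R. (real j + 3/2) * (X j + Y j)) = (\<Sum>j\<le>R. 2/5 * (real j + 3/2) * (X j + Y j))"
      by (simp only: sum_distrib_left mult.assoc)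
    also have "\<dots> \<le> (\<Sum>j\<le>R. \<alpha> * Wj j + 3/5 * Hj j)" by (intro sum_mono A)
    also have "\<dots> = \<alpha> * (\<Sum>j\<le>R. Wj j) + 3/5 * (\<Sum>j\<le>R. Hj j)" by (simp add: sum.distrib sum_distrib_left)
    also have "(\<Sum>j\<le>R. Wj j) \<le> L" unfolding Wj_def L_def qp by (rule L_lower[OF p])
    also have "(\<Sum>j\<le>R. Hj j) \<le> G (g v0)" unfolding Hj_def G_def by (rule hardy_identity[OF p])
    finally show ?thesis using al0 by (simp add: mult_left_mono)
  qed
  have X0: "X 0 = G (g v0)" unfolding X_def by (rule Xs0)
  have Ynn: "Y j \<ge> 0" for j unfolding Y_def by (rule Y_bounds(1)[OF Gmono])
  have C: "(\<Sum>j\<le>R. (real j + 3/2) * (X j + Y j)) \<ge> 3/2 * G (g v0) + (\<Sum>n=1..R. (real n + 1/2) * Y (n - 1) + (real n + 3/2) * X n)"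
  proof -
    have s1: "(\<Sum>j\<le>R. (real j + 3/2) * X j) = 3/2 * X 0 + (\<Sum>n=1..R. (real n + 3/2) * X n)"
    proof -
      have "{..R} = insert 0 {1..R}" by auto
      then show ?thesis by simp
    qed
    have s2: "(\<Sum>j\<le>R. (real j + 3/2) * Y j) \<ge> (\<Sum>n=1..R. (real n + 1/2) * Y (n - 1))"
    proof -
      have "(\<Sum>n=1..R. (real n + 1/2) * Y (n - 1)) = (\<Sum>j\<in>{0..<R}. (real j + 3/2) * Y j)"
      proof -
        have "(\<Sum>n=1..R. (real n + 1/2) * Y (n - 1)) = (\<Sum>j\<in>{0..<R}. (real (Suc j) + 1/2) * Y j)"
          by (rule sum.reindex_bij_witness[of _ Suc "\<lambda>n. n - 1"]) auto
        then show ?thesis by (simp add: add.commute)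
      qed
      also have "\<dots> \<le> (\<Sum>j\<le>R. (real j + 3/2) * Y j)"
        using Ynn by (intro sum_mono2) auto
      finally show ?thesis .
    qed
    have "(\<Sum>j\<le>R. (real j + 3/2) * (X j + Y j)) = (\<Sum>j\<le>R. (real j + 3/2) * X j + (real j + 3/2) * Y j)"
      by (simp only: distrib_left)
    also have "\<dots> = (\<Sum>j\<le>R. (real j + 3/2) * X j) + (\<Sum>j\<le>R. (real j + 3/2) * Y j)"
      by (rule sum.distrib)
    finally have "(\<Sum>j\<le>R. (real j + 3/2) * (X j + Y j)) = (\<Sum>j\<le>R. (real j + 3/2) * X j) + (\<Sum>j\<le>R. (real j + 3/2) * Y j)" .
    then show ?thesis using s1 s2 X0 by (simp add: sum.distrib)
  qed
  have D: "(real n + 1/2) * Y (n - 1) + (real n + 3/2) * X n \<ge> 2 * c * (real n * f n powr p)" if n: "n \<in> {1..R}" for n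
  proof -
    have nR: "n \<le> R" "n - 1 < R" "Suc (n - 1) = n" using n by auto
    have fY: "Y (n - 1) \<ge> c * f n powr p"
    proof (cases "p < 1")
      case True
      then show ?thesis using Y_T1_concave[OF nR(2) p] nR(3) unfolding Y_def G_def c_def by simp
    next
      case False
      then show ?thesis using Y_T1_convex[OF nR(2)] nR(3) unfolding Y_def G_def c_def by simp
    qed
    have fX: "X n \<ge> c * f n powr p"
    proof (cases "p < 1")
      case True
      then show ?thesis using X_T1_concave[OF nR(1) p] unfolding X_def G_def c_def by simp
    next
      case False
      then show ?thesis using X_T1_convex[OF nR(1)] unfolding X_def G_def c_def by simp
    qed
    have fn: "c * f n powr p \<ge> 0" using c0 by simp
    have "(real n + 1/2) * Y (n - 1) \<ge> (real n + 1/2) * (c * f n powr p)" using fY by (intro mult_left_mono) auto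
    moreover have "(real n + 3/2) * X n \<ge> (real n + 3/2) * (c * f n powr p)" using fX by (intro mult_left_mono) auto
    moreover have "(real n + 1/2) * (c * f n powr p) + (real n + 3/2) * (c * f n powr p) \<ge> 2 * c * (real n * f n powr p)"
      using fn by (simp add: algebra_simps)
    ultimately show ?thesis by linarith
  qed
  define S where "S = (\<Sum>n=1..R. real n * f n powr p)"
  have S0: "S \<ge> 0" unfolding S_def by (intro sum_nonneg) auto
  have "(\<Sum>n=1..R. (real n + 1/2) * Y (n - 1) + (real n + 3/2) * X n) \<ge> (\<Sum>n=1..R. 2 * c * (real n * f n powr p))"
    by (intro sum_mono D) auto
  also have "(\<Sum>n=1..R. 2 * c * (real n * f n powr p)) = 2 * c * S" unfolding S_def by (simp add: sum_distrib_left)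
  finally have CD: "(\<Sum>n=1..R. (real n + 1/2) * Y (n - 1) + (real n + 3/2) * X n) \<ge> 2 * c * S" .
  have key: "4/5 * c * S \<le> \<alpha> * L" using B C CD by linarith
  have fac: "(q - 1) / 4 \<le> 4/5 * c / \<alpha>"
  proof (cases "p < 1")
    case True
    have "4/5 * c / \<alpha> = 24 * p / (25 * (2*p+1))" unfolding c_def \<alpha>_def using True p by (simp add: field_simps)
    also have "\<dots> \<ge> p / 4" using True p by (simp add: field_simps)
    finally show ?thesis unfolding p_def by simp
  next
    case False
    have "4/5 * c / \<alpha> = p / 4" unfolding c_def \<alpha>_def using False p by (simp add: field_simps)
    then show ?thesis unfolding p_def by simp
  qed
  have "(q - 1) / 4 * S \<le> 4/5 * c / \<alpha> * S" using fac S0 by (rule mult_right_mono)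
  also have "\<dots> = (4/5 * c * S) / \<alpha>" by simp
  also have "\<dots> \<le> (\<alpha> * L) / \<alpha>" using key al0 by (intro divide_right_mono) auto
  also have "\<dots> = L" using al0 by simp
  finally show ?thesis unfolding L_def S_def p_def .
qed

end

theorem proposition6p2:
  fixes mu :: "'a \<Rightarrow> 'a \<Rightarrow> real" and v0 :: 'a and q :: real and R :: nat
  assumes "weighted_graph mu"
    and "infinite (UNIV :: 'a set)"
    and "connected_graph mu"
    and "locally_finite mu"
    and "q > 1"
    and "R \<ge> 1"
  shows "(\<Sum>x\<in>gball mu v0 R. green mu (gball mu v0 R) v0 x powr q * vmeas mu x)
         \<ge> (q - 1) / 4 * (\<Sum>n=1..R. real n * (\<Sum>k=n..R. 1 / bcond mu v0 k) powr (q - 1))"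
proof -
  interpret wgR mu v0 R
    by unfold_locales (use assms in auto)
  show ?thesis using main_wgR[OF assms(6) assms(5)] unfolding f_def .
qed

end
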